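(* Assume the filtration is regular with constant $R$ and let $r=\frac1{2(R+3)}$. For every bounded $f$ there exists a sparse sequence of stopping times $\{\nu_j\}_{j\ge0}$ such that $$Sf\lesssim\Big(\sum_{j=0}^\infty[\mathsf{P}^r_{\nu_j}(\mathcal{M}_{(\nu_j)}f)]^2\mathbf{1}_{\{\nu_j<\infty\}}\Big)^{1/2},$$ with implicit constant independent of $f$.
   Context: $(\Omega,\mathcal{F},\mu)$ is a probability space with filtration $\{\mathcal{F}_k\}_{k\ge0}$ generating $\mathcal{F}$, $\mathsf{E}_k=\mathsf{E}[\cdot|\mathcal{F}_k]$, $df_k=\mathsf{E}_kf-\mathsf{E}_{k-1}f$ ($k\ge1$), $df_0=\mathsf{E}_0f$. Regular with constant $R$: $\mathsf{E}_kf\le R\,\mathsf{E}_{k-1}f$ a.e. for nonnegative integrable $f$. $Sf=(\sum_{m\ge0}(df_m)^2)^{1/2}$. $\mathsf{P}^r_kg(x):=\inf\{t\in\mathbb{Q}:\mathsf{E}_k[\mathbf{1}_{\{g>t\}}](x)\le r\}$, $\mathsf{P}^r_\nu g=\sum_k\mathbf{1}_{\{\nu=k\}}\mathsf{P}^r_kg$, $\mathcal{M}_{(\nu)}f(x)=\sup_{k\ge\nu(x)}|\mathsf{E}_kf(x)|$. An increasing sequence of stopping times $\{\nu_k\}$ is sparse if with $E_k=\{\nu_k<\infty\}$, for every $k$ and $A\subseteq E_k$ with $A\in\mathcal{F}_{\nu_k}$, $\mu(A\cap E_{k+1})\le\frac12\mu(A)$. *)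

theory Defs
  imports "HOL-Probability.Probability"
begin

definition filtration :: "'a measure \<Rightarrow> (nat \<Rightarrow> 'a measure) \<Rightarrow> bool" where
  "filtration M F \<longleftrightarrow> (\<forall>k. subalgebra M (F k)) \<and> (\<forall>k. sets (F k) \<subseteq> sets (F (Suc k)))
     \<and> sets M = sigma_sets (space M) (\<Union>k. sets (F k))"

definition regular :: "'a measure \<Rightarrow> (nat \<Rightarrow> 'a measure) \<Rightarrow> real \<Rightarrow> bool" where
  "regular M F R \<longleftrightarrow> (\<forall>f k. integrable M f \<and> (AE x in M. 0 \<le> f x) \<and> k \<ge> 1 \<longrightarrow>
      (AE x in M. real_cond_exp M (F k) f x \<le> R * real_cond_exp M (F (k - 1)) f x))"

fun mdiff :: "'a measure \<Rightarrow> (nat \<Rightarrow> 'a measure) \<Rightarrow> ('a \<Rightarrow> real) \<Rightarrow> nat \<Rightarrow> 'a \<Rightarrow> real" where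
  "mdiff M F f 0 x = real_cond_exp M (F 0) f x"
| "mdiff M F f (Suc m) x = real_cond_exp M (F (Suc m)) f x - real_cond_exp M (F m) f x"

definition esqrt :: "ennreal \<Rightarrow> ennreal" where
  "esqrt s = (if s = \<infinity> then \<infinity> else ennreal (sqrt (enn2real s)))"

definition sqfun :: "'a measure \<Rightarrow> (nat \<Rightarrow> 'a measure) \<Rightarrow> ('a \<Rightarrow> real) \<Rightarrow> 'a \<Rightarrow> ennreal" where
  "sqfun M F f x = esqrt (\<Sum>m. ennreal ((mdiff M F f m x)\<^sup>2))"

definition stopping_time_enat :: "'a measure \<Rightarrow> (nat \<Rightarrow> 'a measure) \<Rightarrow> ('a \<Rightarrow> enat) \<Rightarrow> bool" where
  "stopping_time_enat M F \<nu> \<longleftrightarrow> (\<forall>k. {x \<in> space M. \<nu> x = enat k} \<in> sets (F k))"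

definition in_stopped_sets :: "'a measure \<Rightarrow> (nat \<Rightarrow> 'a measure) \<Rightarrow> ('a \<Rightarrow> enat) \<Rightarrow> 'a set \<Rightarrow> bool" where
  "in_stopped_sets M F \<nu> A \<longleftrightarrow> A \<in> sets M \<and> (\<forall>k. A \<inter> {x \<in> space M. \<nu> x = enat k} \<in> sets (F k))"

definition fin_set :: "'a measure \<Rightarrow> ('a \<Rightarrow> enat) \<Rightarrow> 'a set" where
  "fin_set M \<nu> = {x \<in> space M. \<nu> x < \<infinity>}"

definition sparse :: "'a measure \<Rightarrow> (nat \<Rightarrow> 'a measure) \<Rightarrow> (nat \<Rightarrow> 'a \<Rightarrow> enat) \<Rightarrow> bool" where
  "sparse M F \<nu> \<longleftrightarrow> (\<forall>j. stopping_time_enat M F (\<nu> j))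
     \<and> (\<forall>j. \<forall>x \<in> space M. \<nu> j x \<le> \<nu> (Suc j) x)
     \<and> (\<forall>k A. A \<subseteq> fin_set M (\<nu> k) \<and> in_stopped_sets M F (\<nu> k) A \<longrightarrow>
            measure M (A \<inter> fin_set M (\<nu> (Suc k))) \<le> measure M A / 2)"

text \<open>Stopped maximal function M_(\<nu>) f x = sup_{k \<ge> \<nu> x} |E_k f x| (empty sup = 0).\<close>
definition stopped_max :: "'a measure \<Rightarrow> (nat \<Rightarrow> 'a measure) \<Rightarrow> ('a \<Rightarrow> enat) \<Rightarrow> ('a \<Rightarrow> real) \<Rightarrow> 'a \<Rightarrow> ennreal" where
  "stopped_max M F \<nu> f x = (SUP k \<in> {k. \<nu> x \<le> enat k}. ennreal \<bar>real_cond_exp M (F k) f x\<bar>)"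

text \<open>P^r_k g(x) = inf { t \<in> \<rat> : E_k[1_{g>t}](x) \<le> r } (inf of empty set = +\<infinity>).\<close>
definition Pk :: "'a measure \<Rightarrow> (nat \<Rightarrow> 'a measure) \<Rightarrow> real \<Rightarrow> nat \<Rightarrow> ('a \<Rightarrow> ereal) \<Rightarrow> 'a \<Rightarrow> ereal" where
  "Pk M F r k g x = Inf {ereal t | t. t \<in> \<rat> \<and>
      real_cond_exp M (F k) (indicator {y \<in> space M. g y > ereal t}) x \<le> r}"

text \<open>P^r_\<nu> g = \<Sum>_k 1_{\<nu>=k} P^r_k g (hence 0 where \<nu> = \<infinity>).\<close>
definition Pnu :: "'a measure \<Rightarrow> (nat \<Rightarrow> 'a measure) \<Rightarrow> real \<Rightarrow> ('a \<Rightarrow> enat) \<Rightarrow> ('a \<Rightarrow> ereal) \<Rightarrow> 'a \<Rightarrow> ereal" where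
  "Pnu M F r \<nu> g x = (case \<nu> x of enat k \<Rightarrow> Pk M F r k g x | \<infinity> \<Rightarrow> 0)"

end

theory Submission
  imports Defs
begin

locale spsetup =
  fixes M :: "'a measure" and F :: "nat \<Rightarrow> 'a measure" and R :: real and f :: "'a \<Rightarrow> real" and B :: real
  assumes prob: "prob_space M" and filt: "filtration M F" and reg: "regular M F R"
    and fmeas: "f \<in> borel_measurable M" and fbd: "\<forall>x\<in>space M. \<bar>f x\<bar> \<le> B"
begin

interpretation P: prob_space M by (rule prob)

lemma fin: "finite_measure M" by (rule P.finite_measure_axioms)

lemma subalg: "subalgebra M (F k)" using filt unfolding filtration_def by auto

lemma fms: "finite_measure_subalgebra M (F k)"
  unfolding finite_measure_subalgebra_def finite_measure_subalgebra_axioms_def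
  using fin subalg by auto

lemma sfs: "sigma_finite_subalgebra M (F k)"
  using fms by (rule finite_measure_subalgebra_is_sigma_finite)

lemma space_F[simp]: "space (F k) = space M" using subalg[of k] unfolding subalgebra_def by auto

lemma sets_F_M: "A \<in> sets (F k) \<Longrightarrow> A \<in> sets M" using subalg[of k] unfolding subalgebra_def by auto

lemma sets_mono: "i \<le> j \<Longrightarrow> sets (F i) \<subseteq> sets (F j)"
proof (induction j)
  case 0 then show ?case by simp
next
  case (Suc j)
  show ?case
  proof (cases "i = Suc j")
    case True then show ?thesis by simp
  next
    case False
    then have "i \<le> j" using Suc.prems by simp
    then show ?thesis using Suc.IH filt unfolding filtration_def by blast
  qed
qed

lemma subalg_FF: "i \<le> j \<Longrightarrow> subalgebra (F j) (F i)"
  unfolding subalgebra_def using sets_mono by auto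

lemma meas_mono: "i \<le> j \<Longrightarrow> h \<in> borel_measurable (F i) \<Longrightarrow> h \<in> borel_measurable (F j)"
  using measurable_from_subalg[OF subalg_FF] by blast

lemma meas_FM: "h \<in> borel_measurable (F i) \<Longrightarrow> h \<in> borel_measurable M"
  using measurable_from_subalg[OF subalg] by blast

lemma fint: "integrable M f"
  using fbd fmeas by (intro finite_measure.integrable_const_bound[OF fin, where B=B]) auto

abbreviation "E k \<equiv> real_cond_exp M (F k) f"

lemma E_meas[measurable]: "E k \<in> borel_measurable (F k)" "E k \<in> borel_measurable M"
  by auto

lemma E_bd: "AE x in M. \<bar>E k x\<bar> \<le> B"
proof -
  interpret S: sigma_finite_subalgebra M "F k" by (rule sfs)
  have "AE x in M. E k x \<le> B"
    by (rule S.real_cond_exp_le_c[OF fint]) (use fbd in \<open>auto intro!: AE_I2\<close>)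
  moreover have "AE x in M. E k x \<ge> -B"
    by (rule S.real_cond_exp_ge_c[OF fint]) (use fbd in \<open>force intro!: AE_I2\<close>)
  ultimately show ?thesis by auto
qed

lemma E_bd_all: "AE x in M. \<forall>k. \<bar>E k x\<bar> \<le> B"
  using E_bd by (simp add: AE_all_countable)

lemma R_ge1: "R \<ge> 1"
proof -
  interpret S1: sigma_finite_subalgebra M "F 1" by (rule sfs)
  interpret S0: sigma_finite_subalgebra M "F 0" by (rule sfs)
  have i: "integrable M (\<lambda>x. 1::real)" by (simp add: fin finite_measure.integrable_const)
  have "AE x in M. real_cond_exp M (F 1) (\<lambda>x. 1) x \<le> R * real_cond_exp M (F (1 - 1)) (\<lambda>x. 1) x"
    using reg[unfolded regular_def, rule_format, of "\<lambda>x. 1" 1] i by auto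
  moreover have "AE x in M. real_cond_exp M (F 1) (\<lambda>x. 1) x = 1"
    by (rule S1.real_cond_exp_F_meas[OF i]) simp
  moreover have "AE x in M. real_cond_exp M (F 0) (\<lambda>x. 1) x = 1"
    by (rule S0.real_cond_exp_F_meas[OF i]) simp
  ultimately have "AE x in M. 1 \<le> R" by eventually_elim simp
  then have "\<not> (\<not> 1 \<le> R)"
    using P.AE_False P.prob_space by auto
  then show ?thesis by simp
qed

definition "rr = 1 / (2 * (R + 3))"
definition "tt = 1 / (R + 1)"
definition "KK = R + 3"

lemma cst: "0 < rr" "rr < 1" "rr \<le> tt" "0 < tt" "R * tt < 1" "0 < KK"
proof -
  have R: "R \<ge> 1" by (rule R_ge1)
  then have a: "R + 1 > 0" "R + 3 > 0" by auto
  show "0 < rr" "0 < tt" "0 < KK" using a unfolding rr_def tt_def KK_def by auto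
  show "rr < 1" using R unfolding rr_def by (simp add: field_simps)
  show "rr \<le> tt" using R a unfolding rr_def tt_def by (simp add: field_simps)
  show "R * tt < 1" using R a unfolding tt_def by (simp add: field_simps)
qed

lemma cst2: "rr / tt + 1 / KK = 1 / 2"
proof -
  have a: "R + 1 > 0" "R + 3 > 0" "R * R \<ge> 0" "R \<ge> 1" using R_ge1 by auto
  then have "18 + (R * (R * 2) + R * 12) \<noteq> 0" by linarith
  with a show ?thesis unfolding rr_def tt_def KK_def by (simp add: field_simps)
qed

abbreviation "st \<nu> \<equiv> stopping_time_enat M F \<nu>"

lemma st_F: "st \<nu> \<Longrightarrow> {x\<in>space M. \<nu> x = enat n} \<in> sets (F n)"
  unfolding stopping_time_enat_def by auto

lemma st_M: "st \<nu> \<Longrightarrow> {x\<in>space M. \<nu> x = enat n} \<in> sets M"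
  using st_F sets_F_M by blast

lemma st_le_F: assumes "st \<nu>" shows "{x\<in>space M. \<nu> x \<le> enat k} \<in> sets (F k)"
proof -
  have "{x\<in>space M. \<nu> x \<le> enat k} = (\<Union>i\<in>{..k}. {x\<in>space M. \<nu> x = enat i})"
    by (auto simp: enat_ile) (metis atMost_iff enat_ile enat_ord_simps(1))
  also have "\<dots> \<in> sets (F k)"
    using st_F[OF assms] sets_mono by (intro sets.finite_UN) auto
  finally show ?thesis .
qed

lemma st_gr_F: assumes "st \<nu>" shows "{x\<in>space M. enat k < \<nu> x} \<in> sets (F k)"
proof -
  have "{x\<in>space M. enat k < \<nu> x} = space (F k) - {x\<in>space M. \<nu> x \<le> enat k}"
    by auto
  then show ?thesis using sets.compl_sets[OF st_le_F[OF assms]] by simp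
qed

lemma st_count: assumes "st \<nu>" shows "\<nu> \<in> M \<rightarrow>\<^sub>M count_space UNIV"
proof -
  have "\<nu> -` {a} \<inter> space M \<in> sets M" for a
  proof (cases a)
    case (enat n)
    then show ?thesis using st_M[OF assms, of n] by (simp add: vimage_def Int_def conj_commute)
  next
    case infinity
    have "\<nu> -` {a} \<inter> space M = space M - (\<Union>n. {x\<in>space M. \<nu> x = enat n})"
      using infinity by auto
    then show ?thesis using st_M[OF assms] by auto
  qed
  then show ?thesis by (subst measurable_count_space_eq_countable) auto
qed

lemma st_pred: assumes "st \<nu>" shows "Measurable.pred M (\<lambda>x. P (\<nu> x))"
  using measurable_compose[OF st_count[OF assms], of "\<lambda>e. P e" "count_space UNIV"] by auto

lemma Pk_eq: "Pk M F r n g x = (INF t\<in>\<rat>. (if real_cond_exp M (F n) (indicator {y \<in> space M. g y > ereal t}) x \<le> r then ereal t else \<infinity>))"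
  unfolding Pk_def
proof (rule antisym)
  show "Inf {ereal t |t. t \<in> \<rat> \<and> real_cond_exp M (F n) (indicator {y \<in> space M. ereal t < g y}) x \<le> r}
    \<le> (INF t\<in>\<rat>. if real_cond_exp M (F n) (indicator {y \<in> space M. ereal t < g y}) x \<le> r then ereal t else \<infinity>)"
    by (rule INF_greatest) (auto intro: Inf_lower)
  show "(INF t\<in>\<rat>. if real_cond_exp M (F n) (indicator {y \<in> space M. ereal t < g y}) x \<le> r then ereal t else \<infinity>)
    \<le> Inf {ereal t |t. t \<in> \<rat> \<and> real_cond_exp M (F n) (indicator {y \<in> space M. ereal t < g y}) x \<le> r}"
  proof (rule Inf_greatest)
    fix z assume "z \<in> {ereal t |t. t \<in> \<rat> \<and> real_cond_exp M (F n) (indicator {y \<in> space M. ereal t < g y}) x \<le> r}"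
    then obtain t where t: "z = ereal t" "t \<in> \<rat>" "real_cond_exp M (F n) (indicator {y \<in> space M. ereal t < g y}) x \<le> r" by blast
    show "(INF t\<in>\<rat>. if real_cond_exp M (F n) (indicator {y \<in> space M. ereal t < g y}) x \<le> r then ereal t else \<infinity>) \<le> z"
      by (rule INF_lower2[where i=t]) (use t in auto)
  qed
qed

lemma Pk_meas: "Pk M F r n g \<in> borel_measurable (F n)"
  unfolding Pk_eq[abs_def]
  by (rule borel_measurable_INF) (auto simp: countable_rat)

definition "gmax \<nu> y = enn2ereal (stopped_max M F \<nu> f y)"
definition "Lam \<nu> = Pnu M F rr \<nu> (gmax \<nu>)"
definition "lam \<nu> x = real_of_ereal (Lam \<nu> x)"
definition "Gs \<nu> = {y \<in> space M. Lam \<nu> y < gmax \<nu> y}"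
definition "CE \<nu> k x = real_cond_exp M (F k) (indicator (Gs \<nu>)) x"
definition "SS n k x = (\<Sum>m\<in>{n<..k}. (mdiff M F f m x)\<^sup>2)"
definition "bad \<nu> n k x = (tt < CE \<nu> k x \<or> KK * (lam \<nu> x)\<^sup>2 < SS n k x)"
definition "bad' \<nu> n k x = (tt < CE \<nu> k x \<or> KK * (real_of_ereal (Pk M F rr n (gmax \<nu>) x))\<^sup>2 < SS n k x)"
definition nxt :: "('a \<Rightarrow> enat) \<Rightarrow> 'a \<Rightarrow> enat" where
  "nxt \<nu> x = (case \<nu> x of enat n \<Rightarrow>
    (if \<exists>k>n. bad \<nu> n k x then enat (LEAST k. n < k \<and> bad \<nu> n k x) else \<infinity>) | \<infinity> \<Rightarrow> \<infinity>)"

lemma sm_eq: "stopped_max M F \<nu> f y = (SUP k. if \<nu> y \<le> enat k then ennreal \<bar>E k y\<bar> else 0)"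
  unfolding stopped_max_def
proof (rule antisym)
  show "(SUP k\<in>{k. \<nu> y \<le> enat k}. ennreal \<bar>E k y\<bar>) \<le> (SUP k. if \<nu> y \<le> enat k then ennreal \<bar>E k y\<bar> else 0)"
  proof (rule SUP_least)
    fix k assume "k \<in> {k. \<nu> y \<le> enat k}"
    then show "ennreal \<bar>E k y\<bar> \<le> (SUP k. if \<nu> y \<le> enat k then ennreal \<bar>E k y\<bar> else 0)"
      by (intro SUP_upper2[where i=k]) auto
  qed
  show "(SUP k. if \<nu> y \<le> enat k then ennreal \<bar>E k y\<bar> else 0) \<le> (SUP k\<in>{k. \<nu> y \<le> enat k}. ennreal \<bar>E k y\<bar>)"
  proof (rule SUP_least)
    fix k
    show "(if \<nu> y \<le> enat k then ennreal \<bar>E k y\<bar> else 0) \<le> (SUP k\<in>{k. \<nu> y \<le> enat k}. ennreal \<bar>E k y\<bar>)"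
      by (cases "\<nu> y \<le> enat k") (auto intro: SUP_upper)
  qed
qed

lemma gmax_meas: assumes "st \<nu>" shows "gmax \<nu> \<in> borel_measurable M"
proof -
  have p: "Measurable.pred M (\<lambda>y. \<nu> y \<le> enat k)" for k using st_pred[OF assms] .
  have "(\<lambda>y. stopped_max M F \<nu> f y) \<in> borel_measurable M"
    unfolding sm_eq
    by (rule borel_measurable_SUP) (use p in auto)
  then show ?thesis unfolding gmax_def by measurable
qed

lemma Lam_meas: assumes "st \<nu>" shows "Lam \<nu> \<in> borel_measurable M"
proof -
  have "(\<lambda>x. (\<lambda>i x. case i of enat k \<Rightarrow> Pk M F rr k (gmax \<nu>) x | \<infinity> \<Rightarrow> 0) (\<nu> x) x) \<in> borel_measurable M"
  proof (rule measurable_compose_countable[OF _ st_count[OF assms]])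
    fix i :: enat
    show "(\<lambda>x. case i of enat k \<Rightarrow> Pk M F rr k (gmax \<nu>) x | \<infinity> \<Rightarrow> 0) \<in> borel_measurable M"
      by (cases i) (auto intro: meas_FM[OF Pk_meas])
  qed
  then show ?thesis unfolding Lam_def Pnu_def[abs_def] by simp
qed

lemma Gs_sets: assumes "st \<nu>" shows "Gs \<nu> \<in> sets M"
proof -
  have [measurable]: "Lam \<nu> \<in> borel_measurable M" "gmax \<nu> \<in> borel_measurable M"
    using Lam_meas[OF assms] gmax_meas[OF assms] by auto
  show ?thesis unfolding Gs_def by measurable
qed

lemma gmax_ge: "\<nu> x \<le> enat k \<Longrightarrow> ereal \<bar>E k x\<bar> \<le> gmax \<nu> x"
proof -
  assume a: "\<nu> x \<le> enat k"
  have "ennreal \<bar>E k x\<bar> \<le> stopped_max M F \<nu> f x"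
    unfolding stopped_max_def using a by (auto intro: SUP_upper)
  then have "enn2ereal (ennreal \<bar>E k x\<bar>) \<le> gmax \<nu> x" unfolding gmax_def
    using less_eq_ennreal.rep_eq by blast
  then show ?thesis by (simp add: enn2ereal_ennreal)
qed

lemma gmax_nonneg: "0 \<le> gmax \<nu> x" unfolding gmax_def by (simp add: enn2ereal_nonneg)

lemma Lam_at: "\<nu> x = enat n \<Longrightarrow> Lam \<nu> x = Pk M F rr n (gmax \<nu>) x"
  unfolding Lam_def Pnu_def by simp

lemma bad_eq: "\<nu> x = enat n \<Longrightarrow> bad \<nu> n k x = bad' \<nu> n k x"
  unfolding bad_def bad'_def lam_def by (simp add: Lam_at)

lemma mdiff_meas: "mdiff M F f m \<in> borel_measurable (F m)"
proof (cases m)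
  case 0 then show ?thesis by (simp add: mdiff.simps(1)[abs_def])
next
  case (Suc m')
  have "E m' \<in> borel_measurable (F m)" using meas_mono[of m' m "E m'"] Suc by auto
  moreover have "E m \<in> borel_measurable (F m)" by simp
  ultimately show ?thesis using Suc by (simp add: mdiff.simps(2)[abs_def])
qed

lemma SS_meas: "SS n k \<in> borel_measurable (F k)"
proof -
  have [measurable]: "\<And>m. m \<in> {n<..k} \<Longrightarrow> mdiff M F f m \<in> borel_measurable (F k)"
    using meas_mono[OF _ mdiff_meas] by auto
  show ?thesis unfolding SS_def[abs_def] by (rule borel_measurable_sum) (auto intro: borel_measurable_power)
qed

lemma bad'_pred: assumes "n \<le> k" "k \<le> j" shows "Measurable.pred (F j) (bad' \<nu> n k)"
proof -
  have [measurable]: "CE \<nu> k \<in> borel_measurable (F j)"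
    using meas_mono[OF assms(2) borel_measurable_cond_exp] unfolding CE_def[abs_def] by auto
  have [measurable]: "Pk M F rr n (gmax \<nu>) \<in> borel_measurable (F j)"
    using meas_mono[OF _ Pk_meas] assms by auto
  have [measurable]: "SS n k \<in> borel_measurable (F j)"
    using meas_mono[OF assms(2) SS_meas] by auto
  show ?thesis unfolding bad'_def[abs_def] by measurable
qed

lemma nxt_inf: "\<nu> x = \<infinity> \<Longrightarrow> nxt \<nu> x = \<infinity>"
  unfolding nxt_def by simp

lemma nxt_gt: assumes "\<nu> x = enat n" shows "enat n < nxt \<nu> x"
proof (cases "\<exists>k>n. bad \<nu> n k x")
  case True
  then obtain k where "n < k" "bad \<nu> n k x" by blast
  then have "n < (LEAST k. n < k \<and> bad \<nu> n k x)" by (metis (mono_tags, lifting) LeastI)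
  then show ?thesis using True assms unfolding nxt_def by simp
next
  case False then show ?thesis using assms unfolding nxt_def by auto
qed

lemma nxt_ge: "\<nu> x \<le> nxt \<nu> x"
  by (cases "\<nu> x") (auto dest: nxt_gt[THEN less_imp_le] simp: nxt_inf)

lemma nxt_eq_iff: "nxt \<nu> x = enat k \<longleftrightarrow> (\<exists>n<k. \<nu> x = enat n \<and> bad \<nu> n k x \<and> (\<forall>m. n < m \<and> m < k \<longrightarrow> \<not> bad \<nu> n m x))"
proof
  assume a: "nxt \<nu> x = enat k"
  then obtain n where n: "\<nu> x = enat n" by (cases "\<nu> x") (auto simp: nxt_inf)
  then have ex: "\<exists>k>n. bad \<nu> n k x" using a unfolding nxt_def by (auto split: if_splits)
  then have k: "k = (LEAST k. n < k \<and> bad \<nu> n k x)" using a n unfolding nxt_def by simp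
  have "n < k \<and> bad \<nu> n k x" unfolding k using ex by (metis (mono_tags, lifting) LeastI)
  moreover have "\<forall>m. n < m \<and> m < k \<longrightarrow> \<not> bad \<nu> n m x" unfolding k using not_less_Least by blast
  ultimately show "\<exists>n<k. \<nu> x = enat n \<and> bad \<nu> n k x \<and> (\<forall>m. n < m \<and> m < k \<longrightarrow> \<not> bad \<nu> n m x)"
    using n by blast
next
  assume "\<exists>n<k. \<nu> x = enat n \<and> bad \<nu> n k x \<and> (\<forall>m. n < m \<and> m < k \<longrightarrow> \<not> bad \<nu> n m x)"
  then obtain n where n: "n < k" "\<nu> x = enat n" "bad \<nu> n k x" "\<forall>m. n < m \<and> m < k \<longrightarrow> \<not> bad \<nu> n m x" by blast
  have "(LEAST k. n < k \<and> bad \<nu> n k x) = k"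
    by (rule Least_equality) (use n in \<open>auto simp: not_less[symmetric]\<close>)
  then show "nxt \<nu> x = enat k" using n unfolding nxt_def by auto
qed

lemma nxt_notbad: assumes "\<nu> x = enat n" "n < m" "enat m < nxt \<nu> x" shows "\<not> bad \<nu> n m x"
proof
  assume b: "bad \<nu> n m x"
  then have ex: "\<exists>k>n. bad \<nu> n k x" using assms by blast
  have "(LEAST k. n < k \<and> bad \<nu> n k x) \<le> m" by (rule Least_le) (use b assms in auto)
  then show False using assms ex unfolding nxt_def by simp
qed

lemma nxt_bad: assumes "\<nu> x = enat n" "nxt \<nu> x = enat k" shows "bad \<nu> n k x"
  using assms nxt_eq_iff[of \<nu> x k] by auto

lemma st_nxt: assumes "st \<nu>" shows "st (nxt \<nu>)"
  unfolding stopping_time_enat_def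
proof
  fix k
  have "{x \<in> space M. nxt \<nu> x = enat k} = (\<Union>n\<in>{..<k}. {x\<in>space M. \<nu> x = enat n} \<inter>
      {x\<in>space (F k). bad' \<nu> n k x \<and> (\<forall>m\<in>{n<..<k}. \<not> bad' \<nu> n m x)})"
    unfolding nxt_eq_iff by (auto simp: bad_eq)
  also have "\<dots> \<in> sets (F k)"
  proof (intro sets.finite_UN sets.Int)
    fix n assume n: "n \<in> {..<k}"
    show "{x\<in>space M. \<nu> x = enat n} \<in> sets (F k)" using st_F[OF assms, of n] sets_mono[of n k] n by auto
    have "Measurable.pred (F k) (\<lambda>x. bad' \<nu> n k x \<and> (\<forall>m\<in>{n<..<k}. \<not> bad' \<nu> n m x))"
      using n bad'_pred by (intro pred_intros_logic(3) pred_intros_countable_bounded(3) pred_intros_logic(2)) auto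
    then show "{x\<in>space (F k). bad' \<nu> n k x \<and> (\<forall>m\<in>{n<..<k}. \<not> bad' \<nu> n m x)} \<in> sets (F k)"
      by (rule Measurable.predE)
  qed auto
  finally show "{x \<in> space M. nxt \<nu> x = enat k} \<in> sets (F k)" .
qed

lemma ind_int: "H \<in> sets M \<Longrightarrow> integrable M (indicator H :: 'a \<Rightarrow> real)"
  by (rule finite_measure.integrable_const_bound[OF fin, where B=1]) (auto simp: indicator_def)

lemma setint_ind: "D \<in> sets M \<Longrightarrow> H \<in> sets M \<Longrightarrow> (\<integral>x\<in>D. indicator H x \<partial>M) = measure M (D \<inter> H)"
  unfolding set_lebesgue_integral_def
  by (simp add: indicator_inter_arith[symmetric] del: indicator_inter_arith) 

lemma setint_const: "D \<in> sets M \<Longrightarrow> (\<integral>x\<in>D. (c::real) \<partial>M) = c * measure M D"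
  unfolding set_lebesgue_integral_def using fin
  by (simp add: finite_measure.emeasure_finite measure_def)

lemma ce_le:
  assumes D: "D \<in> sets (F k)" and H: "H \<in> sets M"
    and ae: "AE x in M. x \<in> D \<longrightarrow> real_cond_exp M (F k) (indicator H) x \<le> c"
  shows "measure M (D \<inter> H) \<le> c * measure M D"
proof -
  interpret S: sigma_finite_subalgebra M "F k" by (rule sfs)
  have DM: "D \<in> sets M" using D sets_F_M by auto
  have "measure M (D \<inter> H) = (\<integral>x\<in>D. indicator H x \<partial>M)" using setint_ind[OF DM H] by simp
  also have "\<dots> = (\<integral>x\<in>D. real_cond_exp M (F k) (indicator H) x \<partial>M)"
    by (rule S.real_cond_exp_intA[OF ind_int[OF H] D])
  also have "\<dots> \<le> (\<integral>x\<in>D. c \<partial>M)"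
  proof (rule set_integral_mono_AE)
    show "set_integrable M D (real_cond_exp M (F k) (indicator H))"
      unfolding set_integrable_def using DM S.real_cond_exp_int(1)[OF ind_int[OF H]]
      by (intro integrable_mult_indicator) auto
    show "set_integrable M D (\<lambda>x. c)"
      unfolding set_integrable_def using DM fin
      by (intro integrable_mult_indicator) (auto simp: finite_measure.integrable_const)
    show "AE x\<in>D in M. real_cond_exp M (F k) (indicator H) x \<le> c" using ae by simp
  qed
  also have "\<dots> = c * measure M D" by (rule setint_const[OF DM])
  finally show ?thesis .
qed

lemma ce_ge:
  assumes D: "D \<in> sets (F k)" and H: "H \<in> sets M"
    and ae: "AE x in M. x \<in> D \<longrightarrow> c \<le> real_cond_exp M (F k) (indicator H) x"
  shows "c * measure M D \<le> measure M (D \<inter> H)"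
proof -
  interpret S: sigma_finite_subalgebra M "F k" by (rule sfs)
  have DM: "D \<in> sets M" using D sets_F_M by auto
  have "c * measure M D = (\<integral>x\<in>D. c \<partial>M)" by (rule setint_const[OF DM, symmetric])
  also have "\<dots> \<le> (\<integral>x\<in>D. real_cond_exp M (F k) (indicator H) x \<partial>M)"
  proof (rule set_integral_mono_AE)
    show "set_integrable M D (real_cond_exp M (F k) (indicator H))"
      unfolding set_integrable_def using DM S.real_cond_exp_int(1)[OF ind_int[OF H]]
      by (intro integrable_mult_indicator) auto
    show "set_integrable M D (\<lambda>x. c)"
      unfolding set_integrable_def using DM fin
      by (intro integrable_mult_indicator) (auto simp: finite_measure.integrable_const)
    show "AE x\<in>D in M. c \<le> real_cond_exp M (F k) (indicator H) x" using ae by simp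
  qed
  also have "\<dots> = (\<integral>x\<in>D. indicator H x \<partial>M)"
    by (rule S.real_cond_exp_intA[OF ind_int[OF H] D, symmetric])
  also have "\<dots> = measure M (D \<inter> H)" using setint_ind[OF DM H] by simp
  finally show ?thesis .
qed

lemma ce_pt:
  assumes D: "D \<in> sets (F k)" and H: "H \<in> sets M"
    and bd: "\<And>D'. D' \<in> sets (F k) \<Longrightarrow> D' \<subseteq> D \<Longrightarrow> measure M (D' \<inter> H) \<le> c * measure M D'"
  shows "AE x in M. x \<in> D \<longrightarrow> real_cond_exp M (F k) (indicator H) x \<le> c"
proof -
  interpret S: sigma_finite_subalgebra M "F k" by (rule sfs)
  define h where "h = real_cond_exp M (F k) (indicator H)"
  have hm[measurable]: "h \<in> borel_measurable (F k)" unfolding h_def by simp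
  define D' where "D' = {x \<in> space M. x \<in> D \<and> c < h x}"
  have D'F: "D' \<in> sets (F k)"
  proof -
    have "D' = D \<inter> {x\<in>space (F k). c < h x}" unfolding D'_def using D sets.sets_into_space by auto
    moreover have "{x\<in>space (F k). c < h x} \<in> sets (F k)" by measurable
    ultimately show ?thesis using D by auto
  qed
  have D'M: "D' \<in> sets M" using D'F sets_F_M by auto
  have hi: "integrable M h" unfolding h_def using S.real_cond_exp_int(1)[OF ind_int[OF H]] .
  have "measure M (D' \<inter> H) \<le> c * measure M D'" using bd[OF D'F] unfolding D'_def by auto
  moreover have "measure M (D' \<inter> H) = (\<integral>x\<in>D'. h x \<partial>M)"
    using setint_ind[OF D'M H] S.real_cond_exp_intA[OF ind_int[OF H] D'F] unfolding h_def by simp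
  moreover have "c * measure M D' = (\<integral>x\<in>D'. c \<partial>M)" by (rule setint_const[OF D'M, symmetric])
  moreover have "(\<integral>x. indicator D' x * (h x - c) \<partial>M) = (\<integral>x\<in>D'. h x \<partial>M) - (\<integral>x\<in>D'. c \<partial>M)"
  proof -
    have i1: "integrable M (\<lambda>x. indicator D' x * h x)"
      using integrable_mult_indicator[OF D'M hi] by simp
    have i2: "integrable M (\<lambda>x. indicator D' x * c)"
      using integrable_mult_indicator[OF D'M, of "\<lambda>x. c"] fin by (simp add: finite_measure.integrable_const)
    have "(\<integral>x. indicator D' x * (h x - c) \<partial>M) = (\<integral>x. indicator D' x * h x - indicator D' x * c \<partial>M)"
      by (simp add: right_diff_distrib)
    also have "\<dots> = (\<integral>x. indicator D' x * h x \<partial>M) - (\<integral>x. indicator D' x * c \<partial>M)"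
      by (rule Bochner_Integration.integral_diff[OF i1 i2])
    finally show ?thesis unfolding set_lebesgue_integral_def by simp
  qed
  ultimately have le: "(\<integral>x. indicator D' x * (h x - c) \<partial>M) \<le> 0" by linarith
  have int2: "integrable M (\<lambda>x. indicator D' x * (h x - c))"
    using hi D'M fin integrable_mult_indicator[OF D'M, of "\<lambda>x. h x - c"]
    by (auto simp: finite_measure.integrable_const)
  have nn: "AE x in M. 0 \<le> indicator D' x * (h x - c)"
    by (rule AE_I2) (auto simp: D'_def indicator_def)
  have "(\<integral>x. indicator D' x * (h x - c) \<partial>M) = 0"
    using le integral_nonneg_AE[OF nn] by linarith
  then have "AE x in M. indicator D' x * (h x - c) = 0"
    using integral_nonneg_eq_0_iff_AE[OF int2 nn] by simp
  moreover have "D \<subseteq> space M" using sets.sets_into_space[OF sets_F_M[OF D]] .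
  ultimately show ?thesis
    by (auto elim!: eventually_mono simp: D'_def h_def indicator_def split: if_splits)
qed

definition "Bq = real_of_int \<lceil>\<bar>B\<bar>\<rceil>"

lemma Bq: "Bq \<in> \<rat>" "\<bar>B\<bar> \<le> Bq" unfolding Bq_def by auto

lemma gmax_bd: "AE x in M. gmax \<nu> x \<le> ereal Bq"
  using E_bd_all
proof eventually_elim
  case (elim x)
  have "stopped_max M F \<nu> f x \<le> ennreal \<bar>B\<bar>"
    unfolding stopped_max_def using elim by (auto intro!: SUP_least ennreal_leI intro: order_trans[OF _ abs_ge_self])
  then have "gmax \<nu> x \<le> enn2ereal (ennreal \<bar>B\<bar>)" unfolding gmax_def
    using less_eq_ennreal.rep_eq by blast
  also have "\<dots> \<le> ereal Bq" using Bq by (simp add: enn2ereal_ennreal)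
  finally show ?case .
qed

lemma ce_space: "AE x in M. real_cond_exp M (F n) (indicator (space M)) x = 1"
proof -
  interpret S: sigma_finite_subalgebra M "F n" by (rule sfs)
  have "AE x in M. real_cond_exp M (F n) (indicator (space M)) x = indicator (space M) x"
  proof (rule S.real_cond_exp_F_meas[OF ind_int[OF sets.top]])
    show "indicator (space M) \<in> borel_measurable (F n)"
      using borel_measurable_indicator[OF sets.top[of "F n"]] by simp
  qed
  then show ?thesis using AE_space by eventually_elim (simp add: indicator_def)
qed

lemma ce_null: assumes "H \<in> sets M" "AE x in M. x \<notin> H"
  shows "AE x in M. real_cond_exp M (F n) (indicator H) x = 0"
proof -
  interpret S: sigma_finite_subalgebra M "F n" by (rule sfs)
  have "AE x in M. real_cond_exp M (F n) (indicator H) x = real_cond_exp M (F n) (\<lambda>x. 0) x"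
    by (rule S.real_cond_exp_cong) (use assms in \<open>auto elim!: eventually_mono simp: indicator_def\<close>)
  moreover have "AE x in M. real_cond_exp M (F n) (\<lambda>x. 0) x = 0"
    by (rule S.real_cond_exp_F_meas) auto
  ultimately show ?thesis by eventually_elim simp
qed

lemma Lam_bd: assumes "st \<nu>"
  shows "AE x in M. \<forall>n. \<nu> x = enat n \<longrightarrow> 0 \<le> Lam \<nu> x \<and> Lam \<nu> x \<le> ereal Bq"
proof -
  have gm[measurable]: "gmax \<nu> \<in> borel_measurable M" by (rule gmax_meas[OF assms])
  have "AE x in M. \<nu> x = enat n \<longrightarrow> 0 \<le> Lam \<nu> x \<and> Lam \<nu> x \<le> ereal Bq" for n
  proof -
    have HM: "{y \<in> space M. ereal Bq < gmax \<nu> y} \<in> sets M" by measurable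
    have "AE x in M. x \<notin> {y \<in> space M. ereal Bq < gmax \<nu> y}"
      using gmax_bd[of \<nu>] by (auto elim!: eventually_mono)
    from ce_null[OF HM this, of n]
    have a1: "AE x in M. real_cond_exp M (F n) (indicator {y \<in> space M. ereal Bq < gmax \<nu> y}) x = 0" .
    have sp: "\<And>t. t < 0 \<Longrightarrow> {y \<in> space M. ereal t < gmax \<nu> y} = space M"
      using gmax_nonneg by (auto intro: less_le_trans[of _ 0])
    show ?thesis using a1 ce_space[of n]
    proof eventually_elim
      case (elim x)
      show ?case
      proof
        assume nx: "\<nu> x = enat n"
        have L: "Lam \<nu> x = Pk M F rr n (gmax \<nu>) x" by (rule Lam_at[of \<nu> x n, OF nx])
        have "Pk M F rr n (gmax \<nu>) x \<le> ereal Bq"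
          unfolding Pk_def by (rule Inf_lower) (use elim Bq cst in auto)
        moreover have "0 \<le> Pk M F rr n (gmax \<nu>) x"
          unfolding Pk_def
        proof (rule Inf_greatest)
          fix z assume "z \<in> {ereal t |t. t \<in> \<rat> \<and> real_cond_exp M (F n) (indicator {y \<in> space M. ereal t < gmax \<nu> y}) x \<le> rr}"
          then obtain t where t: "z = ereal t" "real_cond_exp M (F n) (indicator {y \<in> space M. ereal t < gmax \<nu> y}) x \<le> rr" by blast
          show "0 \<le> z"
          proof (rule ccontr)
            assume "\<not> 0 \<le> z"
            then have "t < 0" using t by auto
            then have "real_cond_exp M (F n) (indicator {y \<in> space M. ereal t < gmax \<nu> y}) x = 1"
              using sp elim by simp
            then show False using t cst by simp
          qed
        qed
        ultimately show "0 \<le> Lam \<nu> x \<and> Lam \<nu> x \<le> ereal Bq" using L by simp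
      qed
    qed
  qed
  then show ?thesis by (simp only: AE_all_countable) blast
qed

lemma Pk_small: assumes "st \<nu>" "q \<in> \<rat>"
  shows "AE x in M. \<nu> x = enat n \<and> Lam \<nu> x < ereal q \<longrightarrow>
     real_cond_exp M (F n) (indicator {y\<in>space M. ereal q < gmax \<nu> y}) x \<le> rr"
proof -
  interpret S: sigma_finite_subalgebra M "F n" by (rule sfs)
  have gm[measurable]: "gmax \<nu> \<in> borel_measurable M" by (rule gmax_meas[OF assms(1)])
  define c where "c s = real_cond_exp M (F n) (indicator {y\<in>space M. ereal s < gmax \<nu> y})" for s
  have "\<forall>s\<in>\<rat>. AE x in M. s \<le> q \<longrightarrow> c q x \<le> c s x"
  proof
    fix s :: real assume "s \<in> \<rat>"
    show "AE x in M. s \<le> q \<longrightarrow> c q x \<le> c s x"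
    proof (cases "s \<le> q")
      case True
      have "AE x in M. c q x \<le> c s x" unfolding c_def
        by (rule S.real_cond_exp_mono) (use True in \<open>auto intro!: ind_int AE_I2 simp: indicator_def intro: le_less_trans[of "ereal s" "ereal q"]\<close>)
      then show ?thesis by auto
    qed simp
  qed
  then have "AE x in M. \<forall>s\<in>\<rat>. s \<le> q \<longrightarrow> c q x \<le> c s x"
    by (simp add: AE_ball_countable countable_rat)
  then show ?thesis
  proof eventually_elim
    case (elim x)
    show ?case
    proof
      assume a: "\<nu> x = enat n \<and> Lam \<nu> x < ereal q"
      then have "Pk M F rr n (gmax \<nu>) x < ereal q" using Lam_at[of \<nu> x n] by simp
      then obtain z where z: "z \<in> {ereal t |t. t \<in> \<rat> \<and> c t x \<le> rr}" "z < ereal q"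
        unfolding Pk_def c_def by (auto simp: Inf_less_iff)
      then obtain s where s: "z = ereal s" "s \<in> \<rat>" "c s x \<le> rr" by blast
      then have "s \<le> q" using z by simp
      then have "c q x \<le> c s x" using elim s by blast
      then show "real_cond_exp M (F n) (indicator {y\<in>space M. ereal q < gmax \<nu> y}) x \<le> rr"
        using s unfolding c_def by simp
    qed
  qed
qed

lemma dyadic_disj:
  fixes l :: real
  assumes "real k / 2^m \<le> l" "l < (real k + 1) / 2^m" "real k' / 2^m \<le> l" "l < (real k' + 1) / 2^m"
  shows "k = k'"
proof -
  have p: "(0::real) < 2^m" by simp
  have a: "real k \<le> l * 2^m" "l * 2^m < real k + 1" "real k' \<le> l * 2^m" "l * 2^m < real k' + 1"
    using assms p by (auto simp: field_simps)
  then have "real k < real k' + 1" "real k' < real k + 1" by linarith+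
  then show ?thesis by linarith
qed

lemma dyadic_ex:
  fixes l :: real
  assumes "0 \<le> l"
  shows "\<exists>k. real k / 2^m \<le> l \<and> l < (real k + 1) / 2^m"
proof -
  define k where "k = nat \<lfloor>l * 2^m\<rfloor>"
  have p: "(0::real) < 2^m" by simp
  have "real k = of_int \<lfloor>l * 2^m\<rfloor>" unfolding k_def using assms by simp
  then have "real k \<le> l * 2^m" "l * 2^m < real k + 1" by linarith+
  then show ?thesis using p by (intro exI[of _ k]) (auto simp: field_simps)
qed

lemma G_small: assumes st: "st \<nu>" and D: "D \<in> sets (F n)" and Dsub: "D \<subseteq> {x\<in>space M. \<nu> x = enat n}"
  shows "measure M (D \<inter> Gs \<nu>) \<le> rr * measure M D"
proof -
  have gm[measurable]: "gmax \<nu> \<in> borel_measurable M" by (rule gmax_meas[OF st])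
  define P where "P = Pk M F rr n (gmax \<nu>)"
  have PF[measurable]: "P \<in> borel_measurable (F n)" unfolding P_def by (rule Pk_meas)
  have PM[measurable]: "P \<in> borel_measurable M" by (rule meas_FM[OF PF])
  define l where "l y = real_of_ereal (P y)" for y
  have lF[measurable]: "l \<in> borel_measurable (F n)" unfolding l_def[abs_def] by measurable
  have lM[measurable]: "l \<in> borel_measurable M" by (rule meas_FM[OF lF])
  have DM: "D \<in> sets M" by (rule sets_F_M[OF D])
  have GM: "Gs \<nu> \<in> sets M" by (rule Gs_sets[OF st])
  define D0 where "D0 = D \<inter> {x\<in>space M. 0 \<le> P x \<and> P x \<le> ereal Bq}"
  have D0F: "D0 \<in> sets (F n)"
  proof -
    have "{x\<in>space (F n). 0 \<le> P x \<and> P x \<le> ereal Bq} \<in> sets (F n)" by measurable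
    then show ?thesis unfolding D0_def using D by auto
  qed
  have D0M: "D0 \<in> sets M" by (rule sets_F_M[OF D0F])
  have D0sub: "D0 \<subseteq> D" unfolding D0_def by auto
  have lP: "y \<in> D0 \<Longrightarrow> P y = ereal (l y) \<and> 0 \<le> l y" for y
    unfolding D0_def l_def by (cases "P y") auto
  have LP: "y \<in> D \<Longrightarrow> Lam \<nu> y = P y" for y using Dsub Lam_at[of \<nu> y n] unfolding P_def by auto
  have "measure M (D \<inter> Gs \<nu>) \<le> measure M (D0 \<inter> Gs \<nu>)"
  proof (rule finite_measure.finite_measure_mono_AE[OF fin])
    show "D0 \<inter> Gs \<nu> \<in> sets M" using D0M GM by auto
    show "AE x\<in>D \<inter> Gs \<nu> in M. x \<in> D0 \<inter> Gs \<nu>"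
      using Lam_bd[OF st] proof eventually_elim
      case (elim x)
      show ?case using elim Dsub LP[of x] unfolding D0_def by auto
    qed
  qed
  also have "measure M (D0 \<inter> Gs \<nu>) \<le> rr * measure M D0"
  proof -
    define X where "X m = D0 \<inter> {y\<in>space M. ereal (l y + (1/2)^m) < gmax \<nu> y}" for m :: nat
    define Pc where "Pc m k = D0 \<inter> {y\<in>space M. real k / 2^m \<le> l y \<and> l y < (real k + 1) / 2^m}" for m k :: nat
    have XM: "X m \<in> sets M" for m
    proof -
      have "{y\<in>space M. ereal (l y + (1/2)^m) < gmax \<nu> y} \<in> sets M" by measurable
      then show ?thesis unfolding X_def using D0M by auto
    qed
    have PcF: "Pc m k \<in> sets (F n)" for m k
    proof -
      have "{y\<in>space (F n). real k / 2^m \<le> l y \<and> l y < (real k + 1) / 2^m} \<in> sets (F n)" by measurable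
      then show ?thesis unfolding Pc_def using D0F by auto
    qed
    have PcM: "Pc m k \<in> sets M" for m k using sets_F_M[OF PcF] .
    have disj: "disjoint_family (Pc m)" for m
      unfolding disjoint_family_on_def
    proof (intro ballI impI)
      fix k k' :: nat assume "k \<noteq> k'"
      then show "Pc m k \<inter> Pc m k' = {}" unfolding Pc_def using dyadic_disj[of k m _ k'] by auto
    qed
    have cov: "D0 = (\<Union>k. Pc m k)" for m
    proof
      show "(\<Union>k. Pc m k) \<subseteq> D0" unfolding Pc_def by auto
      show "D0 \<subseteq> (\<Union>k. Pc m k)"
      proof
        fix y assume y: "y \<in> D0"
        then obtain k where "real k / 2^m \<le> l y \<and> l y < (real k + 1) / 2^m"
          using lP[OF y] dyadic_ex[of "l y" m] by auto
        moreover have "y \<in> space M" using y D0M sets.sets_into_space by auto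
        ultimately show "y \<in> (\<Union>k. Pc m k)" using y unfolding Pc_def by auto
      qed
    qed
    have piece: "measure M (X m \<inter> Pc m k) \<le> rr * measure M (Pc m k)" for m k
    proof -
      define q where "q = (real k + 1) / 2^m"
      have q: "q \<in> \<rat>" unfolding q_def by simp
      have HM: "{y\<in>space M. ereal q < gmax \<nu> y} \<in> sets M" by measurable
      have "measure M (X m \<inter> Pc m k) \<le> measure M (Pc m k \<inter> {y\<in>space M. ereal q < gmax \<nu> y})"
      proof (rule finite_measure.finite_measure_mono[OF fin])
        show "Pc m k \<inter> {y\<in>space M. ereal q < gmax \<nu> y} \<in> sets M" using PcM HM by auto
        show "X m \<inter> Pc m k \<subseteq> Pc m k \<inter> {y\<in>space M. ereal q < gmax \<nu> y}"
        proof
          fix y assume y: "y \<in> X m \<inter> Pc m k"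
          then have "real k / 2^m \<le> l y" unfolding Pc_def by auto
          then have "q \<le> l y + (1/2)^m" unfolding q_def by (simp add: field_simps power_divide)
          then have "ereal q \<le> ereal (l y + (1/2)^m)" by simp
          also have "\<dots> < gmax \<nu> y" using y unfolding X_def by auto
          finally show "y \<in> Pc m k \<inter> {y\<in>space M. ereal q < gmax \<nu> y}" using y unfolding X_def by auto
        qed
      qed
      also have "\<dots> \<le> rr * measure M (Pc m k)"
      proof (rule ce_le[OF PcF HM])
        show "AE x in M. x \<in> Pc m k \<longrightarrow> real_cond_exp M (F n) (indicator {y\<in>space M. ereal q < gmax \<nu> y}) x \<le> rr"
          using Pk_small[OF st q, of n]
        proof eventually_elim
          case (elim x)
          show ?case
          proof
            assume x: "x \<in> Pc m k"
            then have xD: "x \<in> D" "x \<in> D0" unfolding Pc_def D0_def by auto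
            have "\<nu> x = enat n" using xD Dsub by auto
            moreover have "Lam \<nu> x < ereal q"
              using x LP[OF xD(1)] lP[OF xD(2)] unfolding Pc_def q_def by auto
            ultimately show "real_cond_exp M (F n) (indicator {y\<in>space M. ereal q < gmax \<nu> y}) x \<le> rr"
              using elim by blast
          qed
        qed
      qed
      finally show ?thesis .
    qed
    have Xle: "measure M (X m) \<le> rr * measure M D0" for m
    proof -
      have s1: "(\<lambda>k. measure M (X m \<inter> Pc m k)) sums measure M (\<Union>k. X m \<inter> Pc m k)"
      proof (rule finite_measure.finite_measure_UNION[OF fin])
        show "disjoint_family (\<lambda>k. X m \<inter> Pc m k)"
          using disj[of m] unfolding disjoint_family_on_def by blast
      qed (use XM PcM in auto)
      have "(\<Union>k. X m \<inter> Pc m k) = X m" using cov[of m] unfolding X_def by auto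
      then have s1': "(\<lambda>k. measure M (X m \<inter> Pc m k)) sums measure M (X m)" using s1 by simp
      have s2: "(\<lambda>k. measure M (Pc m k)) sums measure M D0"
        using finite_measure.finite_measure_UNION[OF fin, of "Pc m"] PcM disj cov[of m] by auto
      have s3: "(\<lambda>k. rr * measure M (Pc m k)) sums (rr * measure M D0)" by (rule sums_mult[OF s2])
      show ?thesis by (rule sums_le[OF _ s1' s3]) (use piece in auto)
    qed
    have inc: "incseq X"
    proof (rule incseq_SucI)
      fix m
      have "(1/2::real)^(Suc m) \<le> (1/2)^m" by (simp add: power_le_imp_le_exp)
      then show "X m \<subseteq> X (Suc m)" unfolding X_def
        by (auto intro: le_less_trans[rotated])
    qed
    have un: "(\<Union>m. X m) = D0 \<inter> Gs \<nu>"
    proof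
      show "(\<Union>m. X m) \<subseteq> D0 \<inter> Gs \<nu>"
      proof
        fix y assume "y \<in> (\<Union>m. X m)"
        then obtain m where y: "y \<in> X m" by blast
        then have yD: "y \<in> D0" "y \<in> D" using D0sub unfolding X_def by auto
        have "Lam \<nu> y = ereal (l y)" using LP[OF yD(2)] lP[OF yD(1)] by simp
        also have "\<dots> < ereal (l y + (1/2)^m)" by simp
        also have "\<dots> < gmax \<nu> y" using y unfolding X_def by auto
        finally show "y \<in> D0 \<inter> Gs \<nu>" using yD y unfolding Gs_def X_def by auto
      qed
      show "D0 \<inter> Gs \<nu> \<subseteq> (\<Union>m. X m)"
      proof
        fix y assume y: "y \<in> D0 \<inter> Gs \<nu>"
        then have yD: "y \<in> D0" "y \<in> D" using D0sub by auto
        have Ly: "Lam \<nu> y = ereal (l y)" using LP[OF yD(2)] lP[OF yD(1)] by simp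
        have lt: "ereal (l y) < gmax \<nu> y" using y Ly unfolding Gs_def by auto
        have "\<exists>m. ereal (l y + (1/2)^m) < gmax \<nu> y"
        proof (cases "gmax \<nu> y")
          case (real v)
          then have "0 < v - l y" using lt by simp
          then obtain m where "(1/2::real)^m < v - l y" using real_arch_pow_inv[of "v - l y" "1/2"] by auto
          then show ?thesis using real by (intro exI[of _ m]) simp
        next
          case PInf then show ?thesis by simp
        next
          case MInf then show ?thesis using lt by simp
        qed
        then show "y \<in> (\<Union>m. X m)" using y unfolding X_def Gs_def by auto
      qed
    qed
    have "(\<lambda>m. measure M (X m)) \<longlonglongrightarrow> measure M (\<Union>m. X m)"
      by (rule finite_measure.finite_Lim_measure_incseq[OF fin]) (use XM inc in auto)
    then have "(\<lambda>m. measure M (X m)) \<longlonglongrightarrow> measure M (D0 \<inter> Gs \<nu>)" using un by simp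
    then show ?thesis by (rule LIMSEQ_le_const2) (use Xle in auto)
  qed
  also have "\<dots> \<le> rr * measure M D"
    using cst finite_measure.finite_measure_mono[OF fin D0sub DM] by (auto intro: mult_left_mono)
  finally show ?thesis .
qed

lemma CE_n_small: assumes st: "st \<nu>" shows "AE x in M. \<nu> x = enat n \<longrightarrow> CE \<nu> n x \<le> rr"
proof -
  have "AE x in M. x \<in> {x\<in>space M. \<nu> x = enat n} \<longrightarrow> real_cond_exp M (F n) (indicator (Gs \<nu>)) x \<le> rr"
    by (rule ce_pt[OF st_F[OF st] Gs_sets[OF st]]) (rule G_small[OF st], auto)
  then show ?thesis unfolding CE_def using AE_space by eventually_elim auto
qed

lemma null_AE: assumes "N \<in> sets M" "measure M N = 0" shows "AE x in M. x \<notin> N"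
proof (rule AE_not_in)
  have "emeasure M N = 0" using assms fin by (simp add: finite_measure.emeasure_eq_measure)
  then show "N \<in> null_sets M" using assms by auto
qed

lemma st_ge_F: assumes "st \<nu>" shows "{x\<in>space M. enat (Suc k) \<le> \<nu> x} \<in> sets (F k)"
proof -
  have "{x\<in>space M. enat (Suc k) \<le> \<nu> x} = {x\<in>space M. enat k < \<nu> x}"
    by (auto simp: Suc_ile_eq)
  then show ?thesis using st_gr_F[OF assms] by simp
qed

lemma E_bound: assumes st: "st \<nu>"
  shows "AE x in M. \<forall>n k. \<nu> x = enat n \<and> n \<le> k \<and> enat k \<le> nxt \<nu> x \<longrightarrow> ereal \<bar>E k x\<bar> \<le> Lam \<nu> x"
proof -
  have gm[measurable]: "gmax \<nu> \<in> borel_measurable M" by (rule gmax_meas[OF st])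
  have GM: "Gs \<nu> \<in> sets M" by (rule Gs_sets[OF st])
  have st': "st (nxt \<nu>)" by (rule st_nxt[OF st])
  have one: "AE x in M. \<nu> x = enat n \<and> n \<le> k \<and> enat k \<le> nxt \<nu> x \<longrightarrow> ereal \<bar>E k x\<bar> \<le> Lam \<nu> x" for n k
  proof (cases "n \<le> k")
    case False then show ?thesis by auto
  next
    case nk: True
    define Bk where "Bk = {x\<in>space M. \<nu> x = enat n \<and> enat k \<le> nxt \<nu> x \<and> Pk M F rr n (gmax \<nu>) x < ereal \<bar>E k x\<bar>}"
    have BkF: "Bk \<in> sets (F k)"
    proof -
      have PF[measurable]: "Pk M F rr n (gmax \<nu>) \<in> borel_measurable (F k)" using meas_mono[OF nk Pk_meas] .
      have s1: "{x\<in>space M. \<nu> x = enat n} \<in> sets (F k)" using st_F[OF st, of n] sets_mono[OF nk] by auto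
      have s2: "{x\<in>space M. enat k \<le> nxt \<nu> x} \<in> sets (F k)"
      proof (cases k)
        case 0 then show ?thesis by (simp add: zero_enat_def[symmetric] del: space_F) (metis sets.top space_F)
      next
        case (Suc k')
        then show ?thesis using st_ge_F[OF st', of k'] sets_mono[of k' k] by auto
      qed
      have s3: "{x\<in>space (F k). Pk M F rr n (gmax \<nu>) x < ereal \<bar>E k x\<bar>} \<in> sets (F k)" by measurable
      have "Bk = {x\<in>space M. \<nu> x = enat n} \<inter> {x\<in>space M. enat k \<le> nxt \<nu> x} \<inter> {x\<in>space (F k). Pk M F rr n (gmax \<nu>) x < ereal \<bar>E k x\<bar>}"
        unfolding Bk_def by auto
      then show ?thesis using s1 s2 s3 by auto
    qed
    have BkM: "Bk \<in> sets M" by (rule sets_F_M[OF BkF])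
    have BkG: "Bk \<inter> Gs \<nu> = Bk"
    proof -
      have "x \<in> Gs \<nu>" if x: "x \<in> Bk" for x
      proof -
        have nx: "\<nu> x = enat n" using x unfolding Bk_def by auto
        have "Lam \<nu> x < ereal \<bar>E k x\<bar>" using x Lam_at[of \<nu> x n] unfolding Bk_def by auto
        also have "\<dots> \<le> gmax \<nu> x" by (rule gmax_ge) (use nx nk in auto)
        finally show ?thesis using x unfolding Gs_def Bk_def by auto
      qed
      then show ?thesis by auto
    qed
    have "measure M Bk = 0"
    proof (cases "k = n")
      case True
      have "measure M (Bk \<inter> Gs \<nu>) \<le> rr * measure M Bk"
        by (rule G_small[OF st]) (use BkF True in \<open>auto simp: Bk_def\<close>)
      then have "measure M Bk \<le> rr * measure M Bk" using BkG by simp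
      then show ?thesis using cst(1,2) measure_nonneg[of M Bk]
        by (metis mult_le_cancel_right1 linorder_not_le order_antisym)
    next
      case False
      then obtain k' where k': "k = Suc k'" "n \<le> k'" using nk by (cases k) auto
      have regAE: "AE x in M. CE \<nu> k x \<le> R * CE \<nu> k' x"
        using reg[unfolded regular_def, rule_format, of "indicator (Gs \<nu>)" k] ind_int[OF GM] k'
        unfolding CE_def by (auto intro: AE_I2)
      have "AE x in M. x \<in> Bk \<longrightarrow> real_cond_exp M (F k) (indicator (Gs \<nu>)) x \<le> R * tt"
        using regAE CE_n_small[OF st, of n]
      proof eventually_elim
        case (elim x)
        show ?case
        proof
          assume x: "x \<in> Bk"
          have nx: "\<nu> x = enat n" and kx: "enat k \<le> nxt \<nu> x" using x unfolding Bk_def by auto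
          have "CE \<nu> k' x \<le> tt"
          proof (cases "k' = n")
            case True then show ?thesis using elim nx cst by auto
          next
            case False
            then have "n < k'" using k' by auto
            moreover have "enat k' < nxt \<nu> x" using kx k' by (simp add: Suc_ile_eq)
            ultimately have "\<not> bad \<nu> n k' x" using nxt_notbad[of \<nu> x n k'] nx by blast
            then show ?thesis unfolding bad_def by auto
          qed
          then have "R * CE \<nu> k' x \<le> R * tt" using R_ge1 by (auto intro: mult_left_mono)
          then show "real_cond_exp M (F k) (indicator (Gs \<nu>)) x \<le> R * tt" using elim unfolding CE_def by auto
        qed
      qed
      from ce_le[OF BkF GM this]
      have "measure M Bk \<le> (R * tt) * measure M Bk" using BkG by simp
      then show ?thesis using cst(5) measure_nonneg[of M Bk]
        by (metis mult_le_cancel_right1 linorder_not_le order_antisym)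
    qed
    then have "AE x in M. x \<notin> Bk" using null_AE[OF BkM] by simp
    then show ?thesis
      using Lam_at[of \<nu> _ n] by (auto elim!: eventually_mono simp: Bk_def not_less)
  qed
  then show ?thesis by (simp only: AE_all_countable) blast
qed

lemma intg_bd: "h \<in> borel_measurable M \<Longrightarrow> AE x in M. \<bar>h x\<bar> \<le> C \<Longrightarrow> integrable M (h :: 'a \<Rightarrow> real)"
  by (rule finite_measure.integrable_const_bound[OF fin, where B=C]) auto

lemma orth:
  assumes hF[measurable]: "h \<in> borel_measurable (F m')" and hb: "AE x in M. \<bar>h x\<bar> \<le> c"
  shows "(\<integral>x. h x * (mdiff M F f (Suc m') x)\<^sup>2 \<partial>M) = (\<integral>x. h x * (E (Suc m') x)\<^sup>2 \<partial>M) - (\<integral>x. h x * (E m' x)\<^sup>2 \<partial>M)"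
proof -
  interpret S1: sigma_finite_subalgebra M "F (Suc m')" by (rule sfs)
  interpret S0: sigma_finite_subalgebra M "F m'" by (rule sfs)
  define a where "a = E (Suc m')"
  define b where "b = E m'"
  have hM[measurable]: "h \<in> borel_measurable M" by (rule meas_FM[OF hF])
  have aM[measurable]: "a \<in> borel_measurable M" "b \<in> borel_measurable M" unfolding a_def b_def by auto
  have hb1[measurable]: "(\<lambda>x. h x * b x) \<in> borel_measurable (F (Suc m'))"
    using meas_mono[of m' "Suc m'" "\<lambda>x. h x * b x"] unfolding b_def by auto
  have hb0[measurable]: "(\<lambda>x. h x * b x) \<in> borel_measurable (F m')" unfolding b_def by auto
  have bds: "AE x in M. \<bar>h x\<bar> \<le> c \<and> \<bar>a x\<bar> \<le> B \<and> \<bar>b x\<bar> \<le> B \<and> \<bar>f x\<bar> \<le> B"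
  proof -
    have fAE: "AE x in M. \<bar>f x\<bar> \<le> B" using fbd by (auto intro: AE_I2)
    show ?thesis using hb E_bd[of "Suc m'"] E_bd[of m'] fAE unfolding a_def b_def by eventually_elim auto
  qed
  have mb: "\<bar>u * v\<bar> \<le> c * B" if "\<bar>u\<bar> \<le> c" "\<bar>v\<bar> \<le> B" for u v :: real
    using that by (simp add: abs_mult mult_mono)
  have mb3: "\<bar>u * v * w\<bar> \<le> c * B * B" if "\<bar>u\<bar> \<le> c" "\<bar>v\<bar> \<le> B" "\<bar>w\<bar> \<le> B" for u v w :: real
    using that by (simp add: abs_mult mult_mono)
  have mb3b: "\<bar>u * v\<^sup>2\<bar> \<le> c * B * B" if "\<bar>u\<bar> \<le> c" "\<bar>v\<bar> \<le> B" for u v :: real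
    using mb3[OF that that(2)] by (simp add: power2_eq_square mult.assoc)
  have i_hbf: "integrable M (\<lambda>x. h x * b x * f x)"
  proof (rule intg_bd[where C="c*B*B"])
    show "(\<lambda>x. h x * b x * f x) \<in> borel_measurable M" by (intro borel_measurable_times hM aM(2) fmeas)
    show "AE x in M. \<bar>h x * b x * f x\<bar> \<le> c * B * B" using bds
    proof eventually_elim
      case (elim x) then show ?case using mb3[of "h x" "b x" "f x"] by blast
    qed
  qed
  have i_hba: "integrable M (\<lambda>x. h x * b x * a x)"
    by (rule intg_bd[where C="c*B*B"], measurable, rule eventually_mono[OF bds], auto intro: mb3)
  have i_hbb: "integrable M (\<lambda>x. h x * b x * b x)"
    by (rule intg_bd[where C="c*B*B"], measurable, rule eventually_mono[OF bds], auto intro: mb3)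
  have i_ha2: "integrable M (\<lambda>x. h x * (a x)\<^sup>2)"
    by (rule intg_bd[where C="c*B*B"], measurable, rule eventually_mono[OF bds], auto intro: mb3b)
  have i_hb2: "integrable M (\<lambda>x. h x * (b x)\<^sup>2)"
    by (rule intg_bd[where C="c*B*B"], measurable, rule eventually_mono[OF bds], auto intro: mb3b)
  have e1: "(\<integral>x. h x * b x * a x \<partial>M) = (\<integral>x. h x * b x * f x \<partial>M)"
    using S1.real_cond_exp_intg(2)[OF i_hbf hb1 fmeas] unfolding a_def by simp
  have e0: "(\<integral>x. h x * b x * b x \<partial>M) = (\<integral>x. h x * b x * f x \<partial>M)"
    using S0.real_cond_exp_intg(2)[OF i_hbf hb0 fmeas] unfolding b_def by simp
  have pt: "h x * (mdiff M F f (Suc m') x)\<^sup>2 = (h x * (a x)\<^sup>2 - h x * (b x)\<^sup>2) - 2 * (h x * b x * a x - h x * b x * b x)" for x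
    unfolding a_def b_def by (simp add: power2_eq_square algebra_simps)
  have "(\<integral>x. h x * (mdiff M F f (Suc m') x)\<^sup>2 \<partial>M) =
      (\<integral>x. (h x * (a x)\<^sup>2 - h x * (b x)\<^sup>2) - 2 * (h x * b x * a x - h x * b x * b x) \<partial>M)"
    unfolding pt ..
  also have "\<dots> = (\<integral>x. h x * (a x)\<^sup>2 - h x * (b x)\<^sup>2 \<partial>M) - (\<integral>x. 2 * (h x * b x * a x - h x * b x * b x) \<partial>M)"
    by (rule Bochner_Integration.integral_diff) (use i_ha2 i_hb2 i_hba i_hbb in auto)
  also have "(\<integral>x. 2 * (h x * b x * a x - h x * b x * b x) \<partial>M) = 2 * ((\<integral>x. h x * b x * a x \<partial>M) - (\<integral>x. h x * b x * b x \<partial>M))"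
    using i_hba i_hbb by (simp add: Bochner_Integration.integral_diff)
  also have "\<dots> = 0" using e1 e0 by simp
  also have "(\<integral>x. h x * (a x)\<^sup>2 - h x * (b x)\<^sup>2 \<partial>M) = (\<integral>x. h x * (a x)\<^sup>2 \<partial>M) - (\<integral>x. h x * (b x)\<^sup>2 \<partial>M)"
    by (rule Bochner_Integration.integral_diff[OF i_ha2 i_hb2])
  finally show ?thesis unfolding a_def b_def by simp
qed

lemma tele:
  fixes a :: "nat \<Rightarrow> real" and \<tau> :: enat
  assumes "n \<le> N" "enat n \<le> \<tau>"
  shows "(\<Sum>m\<in>{n<..N}. if enat m \<le> \<tau> then a m - a (m - 1) else 0) = a (if enat N \<le> \<tau> then N else the_enat \<tau>) - a n
    \<and> n \<le> (if enat N \<le> \<tau> then N else the_enat \<tau>) \<and> enat (if enat N \<le> \<tau> then N else the_enat \<tau>) \<le> \<tau>"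
  using assms(1)
proof (induct N rule: dec_induct)
  case base
  then show ?case using assms(2) by simp
next
  case (step N)
  have iv: "{n<..Suc N} = insert (Suc N) {n<..N}" using step(1) by auto
  show ?case
  proof (cases "enat (Suc N) \<le> \<tau>")
    case True
    then have "enat N \<le> \<tau>" by (meson Suc_ile_eq less_imp_le)
    then show ?thesis using step(3) True unfolding iv by simp
  next
    case False
    then obtain t where t: "\<tau> = enat t" "t < Suc N" by (cases \<tau>) auto
    then have "t \<le> N" by simp
    have tn: "n \<le> t" using assms(2) t by simp
    show ?thesis
    proof (cases "enat N \<le> \<tau>")
      case True
      then have "t = N" using t by simp
      then show ?thesis using step(3) True False t unfolding iv by simp
    next
      case F2: False
      then show ?thesis using step(3) False t tn unfolding iv by simp
    qed
  qed
qed

lemma lam_props: assumes st: "st \<nu>"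
  shows "AE x in M. \<forall>n. \<nu> x = enat n \<longrightarrow> (Lam \<nu> x = ereal (lam \<nu> x) \<and> 0 \<le> lam \<nu> x \<and> lam \<nu> x \<le> Bq \<and>
     (\<forall>k. n \<le> k \<and> enat k \<le> nxt \<nu> x \<longrightarrow> \<bar>E k x\<bar> \<le> lam \<nu> x))"
  using Lam_bd[OF st] E_bound[OF st]
proof eventually_elim
  case (elim x)
  show ?case
  proof (intro allI impI)
    fix n assume nx: "\<nu> x = enat n"
    then have b: "0 \<le> Lam \<nu> x" "Lam \<nu> x \<le> ereal Bq" using elim by auto
    then obtain v where v: "Lam \<nu> x = ereal v" by (cases "Lam \<nu> x") auto
    then have lv: "lam \<nu> x = v" unfolding lam_def by simp
    show "Lam \<nu> x = ereal (lam \<nu> x) \<and> 0 \<le> lam \<nu> x \<and> lam \<nu> x \<le> Bq \<and>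
     (\<forall>k. n \<le> k \<and> enat k \<le> nxt \<nu> x \<longrightarrow> \<bar>E k x\<bar> \<le> lam \<nu> x)"
      using b v lv elim nx by auto
  qed
qed

lemma mdiff_bd: "AE x in M. \<forall>m. (mdiff M F f m x)\<^sup>2 \<le> (2*B) * (2*B)"
using E_bd_all
proof eventually_elim
  case (elim x)
  show ?case
  proof
    fix m
    have B0: "0 \<le> B" using elim[rule_format, of 0] abs_ge_zero[of "E 0 x"] by linarith
    have "\<bar>mdiff M F f m x\<bar> \<le> 2 * B"
    proof (cases m)
      case 0 then show ?thesis using elim[rule_format, of 0] B0 by simp
    next
      case (Suc m')
      have "\<bar>E (Suc m') x - E m' x\<bar> \<le> \<bar>E (Suc m') x\<bar> + \<bar>E m' x\<bar>" by (rule abs_triangle_ineq4)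
      also have "\<dots> \<le> 2 * B" using elim[rule_format, of "Suc m'"] elim[rule_format, of m'] by simp
      finally show ?thesis using Suc by simp
    qed
    then have "\<bar>mdiff M F f m x\<bar> \<le> \<bar>2 * B\<bar>" using B0 by simp
    then have "(mdiff M F f m x)\<^sup>2 \<le> (2 * B)\<^sup>2" by (simp only: abs_le_square_iff)
    then show "(mdiff M F f m x)\<^sup>2 \<le> (2*B) * (2*B)" by (simp add: power2_eq_square)
  qed
qed

lemma L2:
  assumes st: "st \<nu>" and D: "D \<in> sets (F n)" and Dsub: "D \<subseteq> {x\<in>space M. \<nu> x = enat n}"
    and wF[measurable]: "w \<in> borel_measurable (F n)" and w0: "\<And>x. 0 \<le> w x" and wc: "\<And>x. w x \<le> c"
  shows "(\<integral>x. indicator D x * w x * (\<Sum>m\<in>{n<..N}. if enat m \<le> nxt \<nu> x then (mdiff M F f m x)\<^sup>2 else 0) \<partial>M)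
     \<le> (\<integral>x. indicator D x * w x * (lam \<nu> x)\<^sup>2 \<partial>M)"
proof -
  define \<tau> where "\<tau> = nxt \<nu>"
  have st': "st \<tau>" unfolding \<tau>_def by (rule st_nxt[OF st])
  define W where "W x = indicator D x * w x" for x
  have WF[measurable]: "W \<in> borel_measurable (F n)" unfolding W_def[abs_def] using D by measurable
  have WM[measurable]: "W \<in> borel_measurable M" by (rule meas_FM[OF WF])
  have c0: "0 \<le> c" using w0 wc order_trans by blast
  have W0: "0 \<le> W x" "W x \<le> c" for x using w0 wc w0[of x] c0 by (auto simp: W_def indicator_def)
  define H where "H m x = W x * indicator {x\<in>space M. enat m \<le> \<tau> x} x" for m x
  have HF: "H (Suc m') \<in> borel_measurable (F m')" if "n \<le> m'" for m'
  proof -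
    have "W \<in> borel_measurable (F m')" by (rule meas_mono[OF that WF])
    moreover have "indicator {x\<in>space M. enat (Suc m') \<le> \<tau> x} \<in> borel_measurable (F m')"
      by (rule borel_measurable_indicator[OF st_ge_F[OF st']])
    ultimately show ?thesis unfolding H_def[abs_def] by (intro borel_measurable_times) auto
  qed
  have Hb: "\<bar>H m x\<bar> \<le> c" for m x using W0[of x] by (auto simp: H_def indicator_def)
  have Eb2: "AE x in M. \<forall>k. \<bar>E k x\<bar> \<le> B" by (rule E_bd_all)
  have sqb: "u\<^sup>2 \<le> B * B" if a: "\<bar>u\<bar> \<le> B" for u :: real
  proof -
    have "\<bar>u\<bar> \<le> \<bar>B\<bar>" using a by linarith
    then have "u\<^sup>2 \<le> B\<^sup>2" by (simp only: abs_le_square_iff)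
    then show ?thesis by (simp add: power2_eq_square)
  qed
  have mdb: "AE x in M. \<forall>m. (mdiff M F f m x)\<^sup>2 \<le> (2*B) * (2*B)" by (rule mdiff_bd)
  have mdM[measurable]: "mdiff M F f m \<in> borel_measurable M" for m by (rule meas_FM[OF mdiff_meas])
  have HM[measurable]: "H m \<in> borel_measurable M" for m
  proof -
    have "Measurable.pred M (\<lambda>x. enat m \<le> \<tau> x)" by (rule st_pred[OF st'])
    then have "{x\<in>space M. enat m \<le> \<tau> x} \<in> sets M" by (simp add: pred_def)
    then show ?thesis unfolding H_def[abs_def] by (intro borel_measurable_times WM borel_measurable_indicator)
  qed
  have intH: "integrable M (\<lambda>x. H m x * g x)" if "g \<in> borel_measurable M" "AE x in M. \<bar>g x\<bar> \<le> C" for m g C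
  proof (rule intg_bd[where C="c * C"])
    show "(\<lambda>x. H m x * g x) \<in> borel_measurable M" using that by measurable
    show "AE x in M. \<bar>H m x * g x\<bar> \<le> c * C" using that(2)
      by eventually_elim (use Hb c0 in \<open>auto simp: abs_mult intro: mult_mono\<close>)
  qed
  have iE2: "AE x in M. \<bar>(E k x)\<^sup>2\<bar> \<le> B * B" for k using E_bd[of k] by eventually_elim (simp add: sqb)
  have imd: "AE x in M. \<bar>(mdiff M F f m x)\<^sup>2\<bar> \<le> (2*B)*(2*B)" for m using mdb by eventually_elim simp
  have step: "(\<integral>x. H m x * (mdiff M F f m x)\<^sup>2 \<partial>M) = (\<integral>x. H m x * (E m x)\<^sup>2 - H m x * (E (m - 1) x)\<^sup>2 \<partial>M)"
    if mN: "m \<in> {n<..N}" for m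
  proof -
    obtain m' where m': "m = Suc m'" "n \<le> m'" using mN by (cases m) auto
    have "(\<integral>x. H m x * (mdiff M F f m x)\<^sup>2 \<partial>M) = (\<integral>x. H m x * (E m x)\<^sup>2 \<partial>M) - (\<integral>x. H m x * (E (m - 1) x)\<^sup>2 \<partial>M)"
      using orth[OF HF[OF m'(2)], of c] Hb m' by (auto intro: AE_I2)
    also have "\<dots> = (\<integral>x. H m x * (E m x)\<^sup>2 - H m x * (E (m - 1) x)\<^sup>2 \<partial>M)"
      by (rule Bochner_Integration.integral_diff[symmetric]) (auto intro!: Bochner_Integration.integrable_sum Bochner_Integration.integrable_diff intH iE2)
    finally show ?thesis .
  qed
  have lhs: "(\<integral>x. indicator D x * w x * (\<Sum>m\<in>{n<..N}. if enat m \<le> nxt \<nu> x then (mdiff M F f m x)\<^sup>2 else 0) \<partial>M)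
      = (\<Sum>m\<in>{n<..N}. (\<integral>x. H m x * (mdiff M F f m x)\<^sup>2 \<partial>M))"
  proof -
    have "(\<lambda>x. indicator D x * w x * (\<Sum>m\<in>{n<..N}. if enat m \<le> nxt \<nu> x then (mdiff M F f m x)\<^sup>2 else 0))
       = (\<lambda>x. \<Sum>m\<in>{n<..N}. H m x * (mdiff M F f m x)\<^sup>2)"
    proof
      fix x
      have Dsp: "D \<subseteq> space M" using Dsub by auto
      show "indicator D x * w x * (\<Sum>m\<in>{n<..N}. if enat m \<le> nxt \<nu> x then (mdiff M F f m x)\<^sup>2 else 0)
         = (\<Sum>m\<in>{n<..N}. H m x * (mdiff M F f m x)\<^sup>2)"
      proof (cases "x \<in> D")
        case True
        then have "x \<in> space M" using Dsp by auto
        then show ?thesis using True unfolding H_def W_def \<tau>_def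
          by (simp add: sum_distrib_left indicator_def) (rule sum.cong, auto)
      next
        case False
        then show ?thesis unfolding H_def W_def by simp
      qed
    qed
    moreover have "(\<integral>x. (\<Sum>m\<in>{n<..N}. H m x * (mdiff M F f m x)\<^sup>2) \<partial>M) = (\<Sum>m\<in>{n<..N}. (\<integral>x. H m x * (mdiff M F f m x)\<^sup>2 \<partial>M))"
      by (rule Bochner_Integration.integral_sum) (rule intH[OF _ imd], measurable)
    ultimately show ?thesis by simp
  qed
  also have "\<dots> = (\<Sum>m\<in>{n<..N}. (\<integral>x. H m x * (E m x)\<^sup>2 - H m x * (E (m - 1) x)\<^sup>2 \<partial>M))"
    by (rule sum.cong) (auto simp: step)
  also have "\<dots> = (\<integral>x. (\<Sum>m\<in>{n<..N}. H m x * (E m x)\<^sup>2 - H m x * (E (m - 1) x)\<^sup>2) \<partial>M)"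
    by (rule Bochner_Integration.integral_sum[symmetric]) (auto intro!: Bochner_Integration.integrable_sum Bochner_Integration.integrable_diff intH iE2)
  also have "\<dots> \<le> (\<integral>x. indicator D x * w x * (lam \<nu> x)\<^sup>2 \<partial>M)"
  proof (rule integral_mono_AE)
    show "integrable M (\<lambda>x. \<Sum>m\<in>{n<..N}. H m x * (E m x)\<^sup>2 - H m x * (E (m - 1) x)\<^sup>2)"
      by (auto intro!: Bochner_Integration.integrable_sum Bochner_Integration.integrable_diff intH iE2)
    have lamM[measurable]: "lam \<nu> \<in> borel_measurable M"
      unfolding lam_def[abs_def] using Lam_meas[OF st] by measurable
    show "integrable M (\<lambda>x. indicator D x * w x * (lam \<nu> x)\<^sup>2)"
    proof (rule intg_bd[where C="c * (Bq * Bq)"])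
      show "(\<lambda>x. indicator D x * w x * (lam \<nu> x)\<^sup>2) \<in> borel_measurable M"
        using sets_F_M[OF D] meas_FM[OF wF] by measurable
      show "AE x in M. \<bar>indicator D x * w x * (lam \<nu> x)\<^sup>2\<bar> \<le> c * (Bq * Bq)"
        using lam_props[OF st]
      proof eventually_elim
        case (elim x)
        show ?case
        proof (cases "x \<in> D")
          case True
          then have "\<nu> x = enat n" using Dsub by auto
          then have "0 \<le> lam \<nu> x" "lam \<nu> x \<le> Bq" using elim by auto
          then have "(lam \<nu> x)\<^sup>2 \<le> Bq * Bq" by (simp add: mult_mono power2_eq_square)
          then show ?thesis using True w0[of x] wc[of x] c0 by (simp add: abs_mult mult_mono)
        qed (simp add: c0)
      qed
    qed
    show "AE x in M. (\<Sum>m\<in>{n<..N}. H m x * (E m x)\<^sup>2 - H m x * (E (m - 1) x)\<^sup>2) \<le> indicator D x * w x * (lam \<nu> x)\<^sup>2"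
      using lam_props[OF st]
    proof eventually_elim
      case (elim x)
      show ?case
      proof (cases "x \<in> D")
        case False
        then show ?thesis by (simp add: H_def W_def)
      next
        case True
        then have nx: "\<nu> x = enat n" and xs: "x \<in> space M" using Dsub by auto
        have tn: "enat n \<le> \<tau> x" unfolding \<tau>_def using nxt_gt[of \<nu> x n, OF nx] by simp
        have "(\<Sum>m\<in>{n<..N}. H m x * (E m x)\<^sup>2 - H m x * (E (m - 1) x)\<^sup>2)
            = W x * (\<Sum>m\<in>{n<..N}. if enat m \<le> \<tau> x then (E m x)\<^sup>2 - (E (m - 1) x)\<^sup>2 else 0)"
          by (auto simp: H_def sum_distrib_left indicator_def xs right_diff_distrib intro!: sum.cong)
        also have "\<dots> \<le> W x * (lam \<nu> x)\<^sup>2"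
        proof (cases "n \<le> N")
          case True
          define ks where "ks = (if enat N \<le> \<tau> x then N else the_enat (\<tau> x))"
          from tele[OF True tn, of "\<lambda>k. (E k x)\<^sup>2"]
          have te: "(\<Sum>m\<in>{n<..N}. if enat m \<le> \<tau> x then (E m x)\<^sup>2 - (E (m - 1) x)\<^sup>2 else 0) = (E ks x)\<^sup>2 - (E n x)\<^sup>2"
            "n \<le> ks" "enat ks \<le> \<tau> x" unfolding ks_def by auto
          have "\<bar>E ks x\<bar> \<le> lam \<nu> x" using elim nx te(2,3) unfolding \<tau>_def by auto
          then have "\<bar>E ks x\<bar> \<le> \<bar>lam \<nu> x\<bar>" by (metis abs_ge_self order_trans)
          then have "(E ks x)\<^sup>2 \<le> (lam \<nu> x)\<^sup>2" by (simp only: abs_le_square_iff)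
          then have "(E ks x)\<^sup>2 - (E n x)\<^sup>2 \<le> (lam \<nu> x)\<^sup>2" by (smt (verit) zero_le_power2)
          then show ?thesis unfolding te(1) using W0(1)[of x] by (rule mult_left_mono)
        next
          case False
          then show ?thesis using W0[of x] by simp
        qed
        finally show ?thesis unfolding W_def by simp
      qed
    qed
  qed
  finally show ?thesis .
qed

lemma sparse_step:
  assumes st: "st \<nu>" and D: "D \<in> sets (F n)" and Dsub: "D \<subseteq> {x\<in>space M. \<nu> x = enat n}"
  shows "measure M (D \<inter> fin_set M (nxt \<nu>)) \<le> measure M D / 2"
proof -
  define \<tau> where "\<tau> = nxt \<nu>"
  have st': "st \<tau>" unfolding \<tau>_def by (rule st_nxt[OF st])
  have DM: "D \<in> sets M" by (rule sets_F_M[OF D])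
  have GM: "Gs \<nu> \<in> sets M" by (rule Gs_sets[OF st])
  have Dsp: "D \<subseteq> space M" using Dsub by auto
  have Dn: "x \<in> D \<Longrightarrow> \<nu> x = enat n" for x using Dsub by auto
  have gm[measurable]: "gmax \<nu> \<in> borel_measurable M" by (rule gmax_meas[OF st])
  have lamM[measurable]: "lam \<nu> \<in> borel_measurable M"
    unfolding lam_def[abs_def] using Lam_meas[OF st] by measurable
  have mdM[measurable]: "mdiff M F f m \<in> borel_measurable M" for m by (rule meas_FM[OF mdiff_meas])
  have CEM[measurable]: "CE \<nu> k \<in> borel_measurable M" for k unfolding CE_def[abs_def] by simp
  have tauM: "{x\<in>space M. \<tau> x = enat k} \<in> sets M" for k by (rule st_M[OF st'])
  have tauP: "Measurable.pred M (\<lambda>x. P (\<tau> x))" for P by (rule st_pred[OF st'])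
  define T1k where "T1k k = D \<inter> {x\<in>space M. \<tau> x = enat k \<and> tt < CE \<nu> k x}" for k
  define T1 where "T1 = (\<Union>k. T1k k)"
  have T1kF: "T1k k \<in> sets (F k)" for k
  proof (cases "n < k")
    case True
    have "{x\<in>space (F k). tt < CE \<nu> k x} \<in> sets (F k)" unfolding CE_def by measurable
    moreover have "D \<in> sets (F k)" using D sets_mono[of n k] True by auto
    moreover have "T1k k = D \<inter> {x\<in>space M. \<tau> x = enat k} \<inter> {x\<in>space (F k). tt < CE \<nu> k x}"
      unfolding T1k_def by auto
    ultimately show ?thesis using st_F[OF st', of k] by auto
  next
    case False
    have "T1k k = {}"
    proof -
      have "\<tau> x \<noteq> enat k" if "x \<in> D" for x
        using nxt_gt[of \<nu> x n] Dn[OF that] False unfolding \<tau>_def by auto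
      then show ?thesis unfolding T1k_def by auto
    qed
    then show ?thesis by simp
  qed
  have T1kM: "T1k k \<in> sets M" for k by (rule sets_F_M[OF T1kF])
  have T1disj: "disjoint_family T1k" unfolding disjoint_family_on_def T1k_def by auto
  have T1G: "tt * measure M (T1k k) \<le> measure M (T1k k \<inter> Gs \<nu>)" for k
    by (rule ce_ge[OF T1kF GM]) (auto intro!: AE_I2 simp: T1k_def CE_def less_imp_le)
  have s1: "(\<lambda>k. measure M (T1k k)) sums measure M T1"
    unfolding T1_def by (rule finite_measure.finite_measure_UNION[OF fin]) (use T1kM T1disj in auto)
  have s2: "(\<lambda>k. measure M (T1k k \<inter> Gs \<nu>)) sums measure M (T1 \<inter> Gs \<nu>)"
  proof -
    have "(\<lambda>k. measure M (T1k k \<inter> Gs \<nu>)) sums measure M (\<Union>k. T1k k \<inter> Gs \<nu>)"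
    proof (rule finite_measure.finite_measure_UNION[OF fin])
      show "disjoint_family (\<lambda>k. T1k k \<inter> Gs \<nu>)" using T1disj unfolding disjoint_family_on_def by blast
    qed (use T1kM GM in auto)
    moreover have "(\<Union>k. T1k k \<inter> Gs \<nu>) = T1 \<inter> Gs \<nu>" unfolding T1_def by auto
    ultimately show ?thesis by simp
  qed
  have "tt * measure M T1 \<le> measure M (T1 \<inter> Gs \<nu>)"
    by (rule sums_le[OF _ sums_mult[OF s1] s2]) (use T1G in auto)
  also have "\<dots> \<le> measure M (D \<inter> Gs \<nu>)"
    by (rule finite_measure.finite_measure_mono[OF fin]) (use DM GM in \<open>auto simp: T1_def T1k_def\<close>)
  also have "\<dots> \<le> rr * measure M D" by (rule G_small[OF st D Dsub])
  finally have T1b: "measure M T1 \<le> rr / tt * measure M D"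
    using cst by (simp add: field_simps)
  have T1M: "T1 \<in> sets M" unfolding T1_def using T1kM by auto
  define SN where "SN N x = (\<Sum>m\<in>{n<..N}. if enat m \<le> \<tau> x then (mdiff M F f m x)\<^sup>2 else 0)" for N x
  have SNM[measurable]: "SN N \<in> borel_measurable M" for N
  proof -
    have [measurable]: "Measurable.pred M (\<lambda>x. enat m \<le> \<tau> x)" for m by (rule tauP)
    show ?thesis unfolding SN_def[abs_def] by measurable
  qed
  have SN0: "0 \<le> SN N x" for N x unfolding SN_def by (auto intro!: sum_nonneg)
  define X where "X N = D \<inter> {x\<in>space M. KK * (lam \<nu> x)\<^sup>2 < SN N x \<and> 1 / (real N + 1) \<le> (lam \<nu> x)\<^sup>2}" for N
  have XM: "X N \<in> sets M" for N
  proof -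
    have "{x\<in>space M. KK * (lam \<nu> x)\<^sup>2 < SN N x \<and> 1 / (real N + 1) \<le> (lam \<nu> x)\<^sup>2} \<in> sets M" by measurable
    then show ?thesis unfolding X_def using DM by auto
  qed
  define P where "P = Pk M F rr n (gmax \<nu>)"
  have PF[measurable]: "P \<in> borel_measurable (F n)" unfolding P_def by (rule Pk_meas)
  have lamP: "x \<in> D \<Longrightarrow> lam \<nu> x = real_of_ereal (P x)" for x
    unfolding lam_def P_def using Lam_at[of \<nu> x n] Dn by simp
  have Xb: "measure M (X N) \<le> measure M D / KK" for N
  proof -
    define c where "c = 1 / (real N + 1)"
    have c0: "0 < c" unfolding c_def by simp
    define w where "w x = 1 / max ((real_of_ereal (P x))\<^sup>2) c" for x
    have wF: "w \<in> borel_measurable (F n)" unfolding w_def[abs_def] by measurable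
    have w0: "0 \<le> w x" for x using c0 unfolding w_def by simp
    have wc: "w x \<le> 1 / c" for x using c0 unfolding w_def by (simp add: frac_le)
    have wM[measurable]: "w \<in> borel_measurable M" by (rule meas_FM[OF wF])
    have bd1: "AE x in M. \<bar>indicator D x * w x * SN N x\<bar> \<le> (1 / c) * (real N * ((2*B)*(2*B)))"
      using mdiff_bd
    proof eventually_elim
      case (elim x)
      have "SN N x \<le> (\<Sum>m\<in>{n<..N}. (2*B)*(2*B))" unfolding SN_def
        by (rule sum_mono) (use elim in auto)
      also have "\<dots> \<le> real N * ((2*B)*(2*B))" by (simp add: mult_right_mono)
      finally have "SN N x \<le> real N * ((2*B)*(2*B))" .
      then have m: "w x * SN N x \<le> (1 / c) * (real N * ((2*B)*(2*B)))"
        using w0[of x] wc[of x] SN0[of N x] c0 by (intro mult_mono) auto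
      have nn: "0 \<le> (1 / c) * (real N * ((2*B)*(2*B)))"
        using \<open>SN N x \<le> real N * ((2*B)*(2*B))\<close> SN0[of N x] c0 by simp
      show ?case using m nn w0[of x] SN0[of N x] by (auto simp: indicator_def)
    qed
    have i1: "integrable M (\<lambda>x. indicator D x * w x * SN N x)"
      by (rule intg_bd[OF _ bd1]) (use DM in measurable)
    have i0: "integrable M (\<lambda>x. indicator (X N) x * KK)"
      using integrable_mult_indicator[where f="\<lambda>x. KK", OF XM[of N]] fin by (simp add: finite_measure.integrable_const)
    have "KK * measure M (X N) = (\<integral>x. indicator (X N) x * KK \<partial>M)"
      using setint_const[OF XM[of N], of KK] unfolding set_lebesgue_integral_def by (simp add: mult.commute) (metis Int_absorb2 XM sets.sets_into_space)
    also have "\<dots> \<le> (\<integral>x. indicator D x * w x * SN N x \<partial>M)"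
    proof (rule integral_mono[OF i0 i1])
      fix x assume "x \<in> space M"
      show "indicator (X N) x * KK \<le> indicator D x * w x * SN N x"
      proof (cases "x \<in> X N")
        case True
        then have xD: "x \<in> D" and a: "KK * (lam \<nu> x)\<^sup>2 < SN N x" "c \<le> (lam \<nu> x)\<^sup>2" unfolding X_def c_def by auto
        have lp: "(lam \<nu> x)\<^sup>2 > 0" using a c0 by linarith
        have "w x = 1 / (lam \<nu> x)\<^sup>2" unfolding w_def using lamP[OF xD] a by simp
        then have "w x * SN N x = SN N x / (lam \<nu> x)\<^sup>2" by simp
        moreover have "KK < SN N x / (lam \<nu> x)\<^sup>2" using a lp by (simp add: field_simps)
        ultimately show ?thesis using True xD by simp
      next
        case False
        then show ?thesis using w0[of x] SN0[of N x] by (simp add: indicator_def)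
      qed
    qed
    also have "\<dots> \<le> (\<integral>x. indicator D x * w x * (lam \<nu> x)\<^sup>2 \<partial>M)"
      unfolding SN_def \<tau>_def by (rule L2[OF st D Dsub wF w0 wc])
    also have "\<dots> \<le> (\<integral>x. indicator D x \<partial>M)"
    proof (rule integral_mono)
      have pt: "indicator D x * w x * (lam \<nu> x)\<^sup>2 \<le> indicator D x" for x
      proof (cases "x \<in> D")
        case True
        have "w x * (lam \<nu> x)\<^sup>2 \<le> 1"
          unfolding w_def lamP[OF True] using c0 by (simp add: field_simps)
        then show ?thesis using True by simp
      qed simp
      show "integrable M (\<lambda>x. indicator D x * w x * (lam \<nu> x)\<^sup>2)"
      proof (rule intg_bd[where C=1])
        show "(\<lambda>x. indicator D x * w x * (lam \<nu> x)\<^sup>2) \<in> borel_measurable M" using DM by measurable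
        show "AE x in M. \<bar>indicator D x * w x * (lam \<nu> x)\<^sup>2\<bar> \<le> 1"
        proof (rule AE_I2)
          fix x
          have nn: "0 \<le> indicator D x * w x * (lam \<nu> x)\<^sup>2" using w0[of x] by simp
          have "indicator D x * w x * (lam \<nu> x)\<^sup>2 \<le> 1"
            using pt[of x] by (rule order_trans) (simp add: indicator_def)
          then show "\<bar>indicator D x * w x * (lam \<nu> x)\<^sup>2\<bar> \<le> 1" using nn by simp
        qed
      qed
      show "integrable M (indicator D :: 'a \<Rightarrow> real)" by (rule ind_int[OF DM])
      show "indicator D x * w x * (lam \<nu> x)\<^sup>2 \<le> indicator D x" for x by (rule pt)
    qed
    also have "\<dots> = measure M D" using DM by simp
    finally show ?thesis using cst by (simp add: field_simps)
  qed
  have Xinc: "incseq X"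
  proof (rule incseq_SucI)
    fix N
    have "SN N x \<le> SN (Suc N) x" for x
    proof (cases "n \<le> N")
      case True
      then have "{n<..Suc N} = insert (Suc N) {n<..N}" by auto
      then show ?thesis unfolding SN_def by simp
    next
      case False
      then have "{n<..N} = {}" by auto
      then show ?thesis using SN0 unfolding SN_def by simp
    qed
    moreover have "1 / (real (Suc N) + 1) \<le> 1 / (real N + 1)" by (simp add: frac_le)
    ultimately show "X N \<subseteq> X (Suc N)" unfolding X_def by (auto intro: order_trans less_le_trans)
  qed
  have "(\<lambda>N. measure M (X N)) \<longlonglongrightarrow> measure M (\<Union>N. X N)"
    by (rule finite_measure.finite_Lim_measure_incseq[OF fin]) (use XM Xinc in auto)
  then have XUb: "measure M (\<Union>N. X N) \<le> measure M D / KK"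
    by (rule LIMSEQ_le_const2) (use Xb in auto)
  have XUM: "(\<Union>N. X N) \<in> sets M" using XM by auto
  have cover: "AE x\<in>D \<inter> fin_set M \<tau> in M. x \<in> T1 \<union> (\<Union>N. X N)"
    using lam_props[OF st]
  proof eventually_elim
    case (elim x)
    show ?case
    proof
      assume xD: "x \<in> D \<inter> fin_set M \<tau>"
      then have nx: "\<nu> x = enat n" and xs: "x \<in> space M" using Dn Dsp by auto
      obtain k where k: "\<tau> x = enat k" using xD unfolding fin_set_def by (cases "\<tau> x") auto
      have bk: "bad \<nu> n k x" using nxt_bad[of \<nu> x n k] nx k unfolding \<tau>_def by simp
      have nk: "n < k" using nxt_gt[of \<nu> x n] nx k unfolding \<tau>_def by simp
      have SNk: "SN k x = SS n k x" unfolding SN_def SS_def using k by (intro sum.cong) auto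
      show "x \<in> T1 \<union> (\<Union>N. X N)"
      proof (cases "tt < CE \<nu> k x")
        case True
        then have "x \<in> T1k k" unfolding T1k_def using xD k xs by auto
        then show ?thesis unfolding T1_def by auto
      next
        case False
        then have big: "KK * (lam \<nu> x)\<^sup>2 < SN k x" using bk SNk unfolding bad_def by auto
        show ?thesis
        proof (cases "lam \<nu> x = 0")
          case True
          have "SS n k x = 0" unfolding SS_def
          proof (rule sum.neutral, rule ballI)
            fix m assume m: "m \<in> {n<..k}"
            then obtain m' where m': "m = Suc m'" "n \<le> m'" by (cases m) auto
            have "\<bar>E m x\<bar> \<le> lam \<nu> x" "\<bar>E m' x\<bar> \<le> lam \<nu> x"
              using elim nx m m' k unfolding \<tau>_def by auto
            then show "(mdiff M F f m x)\<^sup>2 = 0" using True m' by simp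
          qed
          then show ?thesis using big SNk True by simp
        next
          case False
          then have lp: "0 < (lam \<nu> x)\<^sup>2" by simp
          obtain N0 where N0: "1 / (lam \<nu> x)\<^sup>2 < real N0" using reals_Archimedean2 by blast
          define N where "N = max N0 k"
          have "1 / (real N + 1) \<le> (lam \<nu> x)\<^sup>2"
          proof -
            have "1 / (lam \<nu> x)\<^sup>2 < real N + 1" using N0 unfolding N_def by linarith
            then show ?thesis using lp by (simp add: field_simps)
          qed
          moreover have "SN k x \<le> SN N x"
          proof -
            have "{n<..N} = {n<..k} \<union> {k<..N}" unfolding N_def using nk by auto
            then have "SN N x = SN k x + (\<Sum>m\<in>{k<..N}. if enat m \<le> \<tau> x then (mdiff M F f m x)\<^sup>2 else 0)"
              unfolding SN_def by (simp add: sum.union_disjoint)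
            then show ?thesis by (simp add: sum_nonneg)
          qed
          ultimately have "x \<in> X N" unfolding X_def using xD xs big by auto
          then show ?thesis by auto
        qed
      qed
    qed
  qed
  have "measure M (D \<inter> fin_set M \<tau>) \<le> measure M (T1 \<union> (\<Union>N. X N))"
    by (rule finite_measure.finite_measure_mono_AE[OF fin cover]) (use T1M XUM in auto)
  also have "\<dots> \<le> measure M T1 + measure M (\<Union>N. X N)"
    by (rule measure_Un_le[OF T1M XUM])
  also have "\<dots> \<le> rr / tt * measure M D + measure M D / KK" using T1b XUb by linarith
  also have "\<dots> = (rr / tt + 1 / KK) * measure M D" by (simp add: field_simps)
  also have "\<dots> = measure M D / 2" using cst2 by simp
  finally show ?thesis unfolding \<tau>_def .
qed

lemma sparse_full:
  assumes st: "st \<nu>" and Asub: "A \<subseteq> fin_set M \<nu>" and As: "in_stopped_sets M F \<nu> A"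
  shows "measure M (A \<inter> fin_set M (nxt \<nu>)) \<le> measure M A / 2"
proof -
  define An where "An n = A \<inter> {x\<in>space M. \<nu> x = enat n}" for n
  have AnF: "An n \<in> sets (F n)" for n using As unfolding in_stopped_sets_def An_def by auto
  have AnM: "An n \<in> sets M" for n by (rule sets_F_M[OF AnF])
  have disj: "disjoint_family An" unfolding disjoint_family_on_def An_def by auto
  have AU: "A = (\<Union>n. An n)"
  proof
    show "A \<subseteq> (\<Union>n. An n)"
    proof
      fix x assume x: "x \<in> A"
      then have "x \<in> space M" "\<nu> x < \<infinity>" using Asub unfolding fin_set_def by auto
      then show "x \<in> (\<Union>n. An n)" using x unfolding An_def by (cases "\<nu> x") auto
    qed
  qed (auto simp: An_def)
  have finM: "fin_set M (nxt \<nu>) \<in> sets M"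
  proof -
    have "Measurable.pred M (\<lambda>x. nxt \<nu> x < \<infinity>)" by (rule st_pred[OF st_nxt[OF st]])
    then show ?thesis unfolding fin_set_def by (simp add: pred_def)
  qed
  have s1: "(\<lambda>n. measure M (An n)) sums measure M A"
    using finite_measure.finite_measure_UNION[OF fin, of An] AnM disj AU by auto
  have s2: "(\<lambda>n. measure M (An n \<inter> fin_set M (nxt \<nu>))) sums measure M (A \<inter> fin_set M (nxt \<nu>))"
  proof -
    have "(\<lambda>n. measure M (An n \<inter> fin_set M (nxt \<nu>))) sums measure M (\<Union>n. An n \<inter> fin_set M (nxt \<nu>))"
    proof (rule finite_measure.finite_measure_UNION[OF fin])
      show "disjoint_family (\<lambda>n. An n \<inter> fin_set M (nxt \<nu>))" using disj unfolding disjoint_family_on_def by blast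
    qed (use AnM finM in auto)
    moreover have "(\<Union>n. An n \<inter> fin_set M (nxt \<nu>)) = A \<inter> fin_set M (nxt \<nu>)" using AU by auto
    ultimately show ?thesis by simp
  qed
  have "measure M (An n \<inter> fin_set M (nxt \<nu>)) \<le> measure M (An n) / 2" for n
    by (rule sparse_step[OF st AnF]) (auto simp: An_def)
  then show ?thesis by (rule sums_le[OF _ s2 sums_divide[OF s1]])
qed

definition "nus j = (nxt ^^ j) (\<lambda>_. 0)"

lemma nus_Suc: "nus (Suc j) = nxt (nus j)" unfolding nus_def by simp

lemma st_zero: "st (\<lambda>_. 0)"
  unfolding stopping_time_enat_def
proof
  fix k
  show "{x \<in> space M. (0::enat) = enat k} \<in> sets (F k)"
  proof (cases k)
    case 0
    then have "{x \<in> space M. (0::enat) = enat k} = space (F k)" by (simp add: zero_enat_def)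
    then show ?thesis by (metis sets.top)
  next
    case (Suc k')
    then have "{x \<in> space M. (0::enat) = enat k} = {}" by (simp add: zero_enat_def)
    then show ?thesis by (metis sets.empty_sets)
  qed
qed

lemma nus_0: "nus 0 = (\<lambda>_. 0)" unfolding nus_def by simp

lemma st_nus: "st (nus j)"
proof (induction j)
  case 0 show ?case unfolding nus_0 by (rule st_zero)
next
  case (Suc j) then show ?case unfolding nus_Suc by (rule st_nxt)
qed

lemma sparse_nus: "sparse M F nus"
  unfolding sparse_def
proof (intro conjI allI impI ballI)
  fix j show "st (nus j)" by (rule st_nus)
next
  fix j x show "nus j x \<le> nus (Suc j) x" unfolding nus_Suc by (rule nxt_ge)
next
  fix k A assume "A \<subseteq> fin_set M (nus k) \<and> in_stopped_sets M F (nus k) A"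
  then show "measure M (A \<inter> fin_set M (nus (Suc k))) \<le> measure M A / 2"
    unfolding nus_Suc using sparse_full[OF st_nus] by blast
qed

end

lemma blocks_aux:
  fixes nu :: "nat \<Rightarrow> enat" and d e lam :: "nat \<Rightarrow> real" and K :: real
  assumes K0: "0 \<le> K" and J: "nu J = \<infinity>"
    and inc: "\<And>j n. nu j = enat n \<Longrightarrow> enat n < nu (Suc j)"
    and infs: "\<And>j. nu j = \<infinity> \<Longrightarrow> nu (Suc j) = \<infinity>"
    and ebd: "\<And>j n k. nu j = enat n \<Longrightarrow> n \<le> k \<Longrightarrow> enat k \<le> nu (Suc j) \<Longrightarrow> \<bar>e k\<bar> \<le> lam j"
    and sbd: "\<And>j n k. nu j = enat n \<Longrightarrow> n < k \<Longrightarrow> enat k < nu (Suc j) \<Longrightarrow> (\<Sum>m\<in>{n<..k}. (d m)\<^sup>2) \<le> K * (lam j)\<^sup>2"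
    and dS: "\<And>m. d (Suc m) = e (Suc m) - e m"
  shows "J - j = dd \<Longrightarrow> nu j = enat n \<Longrightarrow> (\<Sum>m\<in>{n<..N}. (d m)\<^sup>2) \<le> (K + 4) * (\<Sum>i\<in>{j..<J}. if nu i = \<infinity> then 0 else (lam i)\<^sup>2)"
proof (induction dd arbitrary: j n N)
  have infge: "nu i = \<infinity>" if "J \<le> i" for i
    using that by (induction i rule: dec_induct) (use J infs in auto)
  {
    case 0
    then have "J \<le> j" by simp
    then show ?case using infge 0 by simp
  next
    case (Suc dd)
    then have jJ: "j < J" and dd: "J - Suc j = dd" and nj: "nu j = enat n" by auto
    define f where "f i = (if nu i = \<infinity> then 0 else (lam i)\<^sup>2)" for i
    have f0: "0 \<le> f i" for i unfolding f_def by auto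
    have fj: "f j = (lam j)\<^sup>2" unfolding f_def using nj by simp
    have split: "(\<Sum>i\<in>{j..<J}. f i) = f j + (\<Sum>i\<in>{Suc j..<J}. f i)"
      using jJ by (simp add: sum.atLeast_Suc_lessThan)
    have lam0: "0 \<le> lam j" using ebd[OF nj, of n] inc[OF nj] by (auto intro: order_trans[OF abs_ge_zero] less_imp_le)
    have first: "(\<Sum>m\<in>{n<..q}. (d m)\<^sup>2) \<le> (K + 4) * (lam j)\<^sup>2" if q: "enat q \<le> nu (Suc j)" for q
    proof (cases "q \<le> n")
      case True
      then have "{n<..q} = {}" by auto
      then show ?thesis using K0 by simp
    next
      case False
      then have nq: "n < q" by simp
      show ?thesis
      proof (cases "enat q < nu (Suc j)")
        case True
        have "(\<Sum>m\<in>{n<..q}. (d m)\<^sup>2) \<le> K * (lam j)\<^sup>2" by (rule sbd[OF nj nq True])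
        moreover have "K * (lam j)\<^sup>2 \<le> (K + 4) * (lam j)\<^sup>2" by (rule mult_right_mono) auto
        ultimately show ?thesis by linarith
      next
        case False
        then have qe: "nu (Suc j) = enat q" using q by auto
        obtain q' where q': "q = Suc q'" "n \<le> q'" using nq by (cases q) auto
        have iv: "{n<..q} = insert q {n<..q'}" using q' by auto
        have a: "(\<Sum>m\<in>{n<..q'}. (d m)\<^sup>2) \<le> K * (lam j)\<^sup>2"
        proof (cases "n < q'")
          case True
          then show ?thesis using sbd[OF nj True] qe q' by simp
        next
          case False
          then have "{n<..q'} = {}" by auto
          then show ?thesis using K0 by simp
        qed
        have e1: "\<bar>e q\<bar> \<le> lam j" using ebd[OF nj, of q] nq qe by simp
        have e2: "\<bar>e q'\<bar> \<le> lam j" using ebd[OF nj, of q'] q' qe by simp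
        have "\<bar>d q\<bar> \<le> 2 * lam j" using e1 e2 q' dS[of q'] by simp
        then have "\<bar>d q\<bar> \<le> \<bar>2 * lam j\<bar>" by simp
        then have "(d q)\<^sup>2 \<le> (2 * lam j)\<^sup>2" by (simp only: abs_le_square_iff)
        then have b: "(d q)\<^sup>2 \<le> 4 * (lam j)\<^sup>2" by (simp add: power_mult_distrib)
        have "(\<Sum>m\<in>{n<..q}. (d m)\<^sup>2) = (d q)\<^sup>2 + (\<Sum>m\<in>{n<..q'}. (d m)\<^sup>2)"
          unfolding iv using q' by simp
        then show ?thesis using a b by (simp add: algebra_simps)
      qed
    qed
    show ?case
    proof (cases "nu (Suc j)")
      case infinity
      have "(\<Sum>m\<in>{n<..N}. (d m)\<^sup>2) \<le> (K + 4) * (lam j)\<^sup>2" by (rule first) (simp add: infinity)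
      also have "\<dots> \<le> (K + 4) * (\<Sum>i\<in>{j..<J}. f i)"
        using split fj f0 K0 by (auto intro!: mult_left_mono simp: sum_nonneg)
      finally show ?thesis unfolding f_def .
    next
      case (enat p)
      have np: "n < p" using inc[OF nj] enat by simp
      have IH: "(\<Sum>m\<in>{p<..N}. (d m)\<^sup>2) \<le> (K + 4) * (\<Sum>i\<in>{Suc j..<J}. f i)"
        using Suc.IH[OF dd enat] unfolding f_def .
      have un: "{n<..N} = {n<..min N p} \<union> {p<..N}" using np by auto
      have "(\<Sum>m\<in>{n<..N}. (d m)\<^sup>2) = (\<Sum>m\<in>{n<..min N p}. (d m)\<^sup>2) + (\<Sum>m\<in>{p<..N}. (d m)\<^sup>2)"
        unfolding un by (rule sum.union_disjoint) auto
      also have "\<dots> \<le> (K + 4) * (lam j)\<^sup>2 + (K + 4) * (\<Sum>i\<in>{Suc j..<J}. f i)"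
        using first[of "min N p"] IH enat by (intro add_mono) auto
      also have "\<dots> = (K + 4) * (\<Sum>i\<in>{j..<J}. f i)" using split fj by (simp add: algebra_simps)
      finally show ?thesis unfolding f_def .
    qed
  }
qed

lemma blocks:
  fixes nu :: "nat \<Rightarrow> enat" and d e lam :: "nat \<Rightarrow> real" and K :: real
  assumes K0: "0 \<le> K" and J: "nu J = \<infinity>" and nu0: "nu 0 = 0"
    and inc: "\<And>j n. nu j = enat n \<Longrightarrow> enat n < nu (Suc j)"
    and infs: "\<And>j. nu j = \<infinity> \<Longrightarrow> nu (Suc j) = \<infinity>"
    and ebd: "\<And>j n k. nu j = enat n \<Longrightarrow> n \<le> k \<Longrightarrow> enat k \<le> nu (Suc j) \<Longrightarrow> \<bar>e k\<bar> \<le> lam j"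
    and sbd: "\<And>j n k. nu j = enat n \<Longrightarrow> n < k \<Longrightarrow> enat k < nu (Suc j) \<Longrightarrow> (\<Sum>m\<in>{n<..k}. (d m)\<^sup>2) \<le> K * (lam j)\<^sup>2"
    and dS: "\<And>m. d (Suc m) = e (Suc m) - e m" and d0: "d 0 = e 0"
  shows "(\<Sum>m<N. (d m)\<^sup>2) \<le> (K + 5) * (\<Sum>i<J. if nu i = \<infinity> then 0 else (lam i)\<^sup>2)"
proof -
  define f where "f i = (if nu i = \<infinity> then 0 else (lam i)\<^sup>2)" for i
  have f0: "0 \<le> f i" for i unfolding f_def by auto
  have nz: "nu 0 = enat 0" using nu0 by (simp add: zero_enat_def)
  have J0: "0 < J" using J nu0 by (cases J) auto
  have "(\<Sum>m<N. (d m)\<^sup>2) \<le> (\<Sum>m\<in>{..N}. (d m)\<^sup>2)" by (rule sum_mono2) auto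
  also have "{..N} = insert 0 {0<..N}" by auto
  also have "(\<Sum>m\<in>insert 0 {0<..N}. (d m)\<^sup>2) = (d 0)\<^sup>2 + (\<Sum>m\<in>{0<..N}. (d m)\<^sup>2)" by simp
  also have "(\<Sum>m\<in>{0<..N}. (d m)\<^sup>2) \<le> (K + 4) * (\<Sum>i\<in>{0..<J}. f i)"
    unfolding f_def by (rule blocks_aux[OF K0 J inc infs ebd sbd dS _ nz]) simp_all
  also have "(d 0)\<^sup>2 \<le> f 0"
  proof -
    have "\<bar>e 0\<bar> \<le> lam 0" using ebd[OF nz, of 0] inc[OF nz] by simp
    then have "\<bar>d 0\<bar> \<le> \<bar>lam 0\<bar>" using d0 by simp
    then have "(d 0)\<^sup>2 \<le> (lam 0)\<^sup>2" by (simp only: abs_le_square_iff)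
    then show ?thesis unfolding f_def using nu0 by simp
  qed
  also have "f 0 \<le> (\<Sum>i\<in>{0..<J}. f i)" using J0 f0 by (intro member_le_sum) auto
  finally have "(\<Sum>m<N. (d m)\<^sup>2) \<le> (K + 5) * (\<Sum>i\<in>{0..<J}. f i)" by (simp add: algebra_simps)
  then show ?thesis unfolding f_def by (simp add: atLeast0LessThan)
qed

lemma esqrt_mult:
  assumes "S \<le> ennreal c * T" "0 < c"
  shows "esqrt S \<le> ennreal (sqrt c) * esqrt T"
proof (cases "T = \<infinity>")
  case True
  then show ?thesis using assms(2) by (simp add: esqrt_def ennreal_mult_top)
next
  case False
  then obtain t where t: "T = ennreal t" "0 \<le> t" by (cases T) auto
  have ct: "0 \<le> c * t" using assms(2) t by simp
  have "S \<le> ennreal (c * t)" using assms t ennreal_mult[of c t] by simp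
  moreover have "S \<noteq> \<top>" using calculation by (auto simp: top_unique)
  ultimately obtain s where s: "S = ennreal s" "0 \<le> s" "s \<le> c * t"
    using ct by (cases S rule: ennreal_cases) (auto simp: ennreal_le_iff)
  have "esqrt S = ennreal (sqrt s)" using s by (simp add: esqrt_def)
  also have "\<dots> \<le> ennreal (sqrt (c * t))" using s by (simp add: ennreal_leI)
  also have "\<dots> = ennreal (sqrt c) * ennreal (sqrt t)" unfolding real_sqrt_mult by (rule ennreal_mult) (use assms(2) t in auto)
  also have "ennreal (sqrt t) = esqrt T" using t by (simp add: esqrt_def)
  finally show ?thesis .
qed

context spsetup
begin

lemma fin_nus_sets: "fin_set M (nus j) \<in> sets M"
proof -
  have "Measurable.pred M (\<lambda>x. nus j x < \<infinity>)" by (rule st_pred[OF st_nus])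
  then show ?thesis unfolding fin_set_def by (simp add: pred_def)
qed

lemma fin_nus_meas: "measure M (fin_set M (nus j)) \<le> (1/2)^j"
proof (induction j)
  case 0
  show ?case using finite_measure.bounded_measure[OF fin] prob_space.prob_space[OF prob] by simp
next
  case (Suc j)
  have sub: "fin_set M (nus (Suc j)) \<subseteq> fin_set M (nus j)"
  proof
    fix x assume "x \<in> fin_set M (nus (Suc j))"
    then have x: "x \<in> space M" "nxt (nus j) x < \<infinity>" unfolding fin_set_def nus_Suc by auto
    have "nus j x < \<infinity>" by (rule le_less_trans[OF nxt_ge x(2)])
    then show "x \<in> fin_set M (nus j)" using x unfolding fin_set_def by simp
  qed
  have ins: "in_stopped_sets M F (nus j) (fin_set M (nus j))"
    unfolding in_stopped_sets_def
  proof (intro conjI allI)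
    show "fin_set M (nus j) \<in> sets M" by (rule fin_nus_sets)
    fix k
    have "fin_set M (nus j) \<inter> {x\<in>space M. nus j x = enat k} = {x\<in>space M. nus j x = enat k}"
      unfolding fin_set_def by auto
    then show "fin_set M (nus j) \<inter> {x\<in>space M. nus j x = enat k} \<in> sets (F k)"
      using st_F[OF st_nus] by simp
  qed
  have "measure M (fin_set M (nus j) \<inter> fin_set M (nxt (nus j))) \<le> measure M (fin_set M (nus j)) / 2"
    by (rule sparse_full[OF st_nus _ ins]) simp
  then have "measure M (fin_set M (nus (Suc j))) \<le> measure M (fin_set M (nus j)) / 2"
    using sub unfolding nus_Suc by (simp add: Int_absorb1)
  then show ?case using Suc.IH by simp
qed

lemma eventually_inf: "AE x in M. \<exists>J. nus J x = \<infinity>"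
proof -
  define Z where "Z = (\<Inter>j. fin_set M (nus j))"
  have ZM: "Z \<in> sets M" unfolding Z_def using fin_nus_sets by auto
  have "measure M Z \<le> (1/2)^j" for j
  proof -
    have "measure M Z \<le> measure M (fin_set M (nus j))"
      by (rule finite_measure.finite_measure_mono[OF fin]) (auto simp: Z_def fin_nus_sets)
    then show ?thesis using fin_nus_meas[of j] by simp
  qed
  then have "measure M Z = 0"
  proof -
    assume a: "\<And>j. measure M Z \<le> (1/2)^j"
    show ?thesis
    proof (rule ccontr)
      assume "measure M Z \<noteq> 0"
      then have "0 < measure M Z" using measure_nonneg[of M Z] by linarith
      then obtain j where "(1/2::real)^j < measure M Z" using real_arch_pow_inv[of "measure M Z" "1/2"] by auto
      then show False using a[of j] by simp
    qed
  qed
  then have "AE x in M. x \<notin> Z" by (rule null_AE[OF ZM])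
  moreover note AE_space
  ultimately show ?thesis
    by eventually_elim (auto simp: Z_def fin_set_def)
qed

lemma main_AE:
  "AE x in M. sqfun M F f x \<le> ennreal (sqrt (KK + 5)) * esqrt (\<Sum>j.
                  e2ennreal ((Pnu M F (1 / (2 * (R + 3))) (nus j)
                      (\<lambda>y. enn2ereal (stopped_max M F (nus j) f y)) x)\<^sup>2)
                  * indicator (fin_set M (nus j)) x)"
proof -
  have lp: "AE x in M. \<forall>j n. nus j x = enat n \<longrightarrow> (Lam (nus j) x = ereal (lam (nus j) x) \<and> 0 \<le> lam (nus j) x \<and> lam (nus j) x \<le> Bq \<and>
     (\<forall>k. n \<le> k \<and> enat k \<le> nxt (nus j) x \<longrightarrow> \<bar>E k x\<bar> \<le> lam (nus j) x))"
    using lam_props[OF st_nus] by (simp add: AE_all_countable)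
  show ?thesis using lp eventually_inf AE_space
  proof eventually_elim
    case (elim x)
    obtain J where J: "nus J x = \<infinity>" using elim by blast
    define T where "T = (\<Sum>j. e2ennreal ((Pnu M F (1 / (2 * (R + 3))) (nus j)
                      (\<lambda>y. enn2ereal (stopped_max M F (nus j) f y)) x)\<^sup>2)
                  * indicator (fin_set M (nus j)) x)"
    define fl where "fl i = (if nus i x = \<infinity> then 0 else (lam (nus i) x)\<^sup>2)" for i
    have fl0: "0 \<le> fl i" for i unfolding fl_def by auto
    have K0: "0 \<le> KK" using cst by simp
    have bl: "(\<Sum>m<N. (mdiff M F f m x)\<^sup>2) \<le> (KK + 5) * (\<Sum>i<J. fl i)" for N
      unfolding fl_def
    proof (rule blocks[where nu="\<lambda>j. nus j x" and e="\<lambda>k. E k x" and lam="\<lambda>j. lam (nus j) x", OF K0 J])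
      show "nus 0 x = 0" by (simp add: nus_0)
      show "\<And>j n. nus j x = enat n \<Longrightarrow> enat n < nus (Suc j) x"
        unfolding nus_Suc by (rule nxt_gt)
      show "\<And>j. nus j x = \<infinity> \<Longrightarrow> nus (Suc j) x = \<infinity>"
        unfolding nus_Suc by (rule nxt_inf)
      show "\<And>j n k. nus j x = enat n \<Longrightarrow> n \<le> k \<Longrightarrow> enat k \<le> nus (Suc j) x \<Longrightarrow> \<bar>E k x\<bar> \<le> lam (nus j) x"
        using elim unfolding nus_Suc by blast
      show "(\<Sum>m\<in>{n<..k}. (mdiff M F f m x)\<^sup>2) \<le> KK * (lam (nus j) x)\<^sup>2"
        if "nus j x = enat n" "n < k" "enat k < nus (Suc j) x" for j n k
      proof -
        have "\<not> bad (nus j) n k x" using nxt_notbad[of "nus j" x n k] that unfolding nus_Suc by blast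
        then show ?thesis unfolding bad_def SS_def by simp
      qed
      show "\<And>m. mdiff M F f (Suc m) x = E (Suc m) x - E m x" by simp
      show "mdiff M F f 0 x = E 0 x" by simp
    qed
    have termeq: "e2ennreal ((Pnu M F (1 / (2 * (R + 3))) (nus i)
                      (\<lambda>y. enn2ereal (stopped_max M F (nus i) f y)) x)\<^sup>2)
                  * indicator (fin_set M (nus i)) x = ennreal (fl i)" for i
    proof (cases "nus i x")
      case (enat n)
      have "Pnu M F (1 / (2 * (R + 3))) (nus i) (\<lambda>y. enn2ereal (stopped_max M F (nus i) f y)) x = Lam (nus i) x"
        unfolding Lam_def rr_def gmax_def[abs_def] ..
      also have "\<dots> = ereal (lam (nus i) x)" using elim enat by blast
      finally show ?thesis using enat elim unfolding fl_def fin_set_def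
        by (simp add: ereal_power indicator_def)
    next
      case infinity
      then show ?thesis unfolding fl_def fin_set_def by (simp add: indicator_def)
    qed
    have Tge: "ennreal (\<Sum>i<J. fl i) \<le> T"
    proof -
      have "ennreal (\<Sum>i<J. fl i) = (\<Sum>i<J. ennreal (fl i))" by (rule sum_ennreal[symmetric]) (use fl0 in auto)
      also have "\<dots> \<le> T" unfolding T_def termeq by (rule sum_le_suminf) auto
      finally show ?thesis .
    qed
    have Sle: "(\<Sum>m. ennreal ((mdiff M F f m x)\<^sup>2)) \<le> ennreal (KK + 5) * T"
    proof (rule suminf_le_const)
      show "summable (\<lambda>m. ennreal ((mdiff M F f m x)\<^sup>2))" by simp
      fix N
      have "(\<Sum>m<N. ennreal ((mdiff M F f m x)\<^sup>2)) = ennreal (\<Sum>m<N. (mdiff M F f m x)\<^sup>2)"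
        by (rule sum_ennreal) auto
      also have "\<dots> \<le> ennreal ((KK + 5) * (\<Sum>i<J. fl i))" by (rule ennreal_leI[OF bl])
      also have "\<dots> = ennreal (KK + 5) * ennreal (\<Sum>i<J. fl i)"
        by (rule ennreal_mult) (use K0 fl0 in \<open>auto intro: sum_nonneg\<close>)
      also have "\<dots> \<le> ennreal (KK + 5) * T" by (rule mult_left_mono[OF Tge]) simp
      finally show "(\<Sum>m<N. ennreal ((mdiff M F f m x)\<^sup>2)) \<le> ennreal (KK + 5) * T" .
    qed
    have "sqfun M F f x \<le> ennreal (sqrt (KK + 5)) * esqrt T"
      unfolding sqfun_def by (rule esqrt_mult[OF Sle]) (use K0 in simp)
    then show ?case unfolding T_def .
  qed
qed

end

theorem corollary2p3:
  fixes M :: "'a measure" and F :: "nat \<Rightarrow> 'a measure" and R :: real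
  assumes "prob_space M"
    and "filtration M F"
    and "regular M F R"
  shows "\<exists>C::real. \<forall>f::'a \<Rightarrow> real.
           f \<in> borel_measurable M \<and> (\<exists>B. \<forall>x \<in> space M. \<bar>f x\<bar> \<le> B) \<longrightarrow>
           (\<exists>\<nu> :: nat \<Rightarrow> 'a \<Rightarrow> enat. sparse M F \<nu> \<and>
              (AE x in M. sqfun M F f x \<le> ennreal C * esqrt (\<Sum>j.
                  e2ennreal ((Pnu M F (1 / (2 * (R + 3))) (\<nu> j)
                      (\<lambda>y. enn2ereal (stopped_max M F (\<nu> j) f y)) x)\<^sup>2)
                  * indicator (fin_set M (\<nu> j)) x)))"
proof (intro exI[of _ "sqrt (R + 3 + 5)"] allI impI)
  fix f :: "'a \<Rightarrow> real"
  assume a: "f \<in> borel_measurable M \<and> (\<exists>B. \<forall>x \<in> space M. \<bar>f x\<bar> \<le> B)"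
  then obtain B where B: "\<forall>x \<in> space M. \<bar>f x\<bar> \<le> B" by blast
  interpret S: spsetup M F R f B
    by (intro spsetup.intro assms(1) assms(2) assms(3) conjunct1[OF a] B)
  have sp: "sparse M F S.nus" by (rule S.sparse_nus)
  have ae: "AE x in M. sqfun M F f x \<le> ennreal (sqrt (R + 3 + 5)) * esqrt (\<Sum>j.
                  e2ennreal ((Pnu M F (1 / (2 * (R + 3))) (S.nus j)
                      (\<lambda>y. enn2ereal (stopped_max M F (S.nus j) f y)) x)\<^sup>2)
                  * indicator (fin_set M (S.nus j)) x)"
    using S.main_AE unfolding S.KK_def .
  show "\<exists>\<nu> :: nat \<Rightarrow> 'a \<Rightarrow> enat. sparse M F \<nu> \<and>
              (AE x in M. sqfun M F f x \<le> ennreal (sqrt (R + 3 + 5)) * esqrt (\<Sum>j.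
                  e2ennreal ((Pnu M F (1 / (2 * (R + 3))) (\<nu> j)
                      (\<lambda>y. enn2ereal (stopped_max M F (\<nu> j) f y)) x)\<^sup>2)
                  * indicator (fin_set M (\<nu> j)) x))"
    by (rule exI[of _ S.nus], rule conjI[OF sp ae])
qed

end
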